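(* Let $m,\ell\ge1$ be integers, set $n=m\ell$, and let $1\le s\le\ell$. The number of $(m+2)$-angulations of the once-punctured polygon $P_n^\bullet$ with exactly $s$ spokes is $m\binom{n+\ell-s-1}{n-1}$.
   Context: $P_n^\bullet$ is a disc with $n$ marked points $v_0,\ldots,v_{n-1}$ on its boundary (in clockwise order, indices mod $n$) and one marked point $\bullet$ (the puncture) in its interior. An arc is a non-self-intersecting curve in the disc whose endpoints are marked points and whose interior avoids the marked points, considered up to isotopy, and not isotopic to a boundary segment or contractible. Two arcs are non-crossing if they have non-crossing representatives in their isotopy classes. A spoke is an arc with an endpoint at $\bullet$. For $m\ge1$, an $(m+2)$-angulation of $P_n^\bullet$ is a set $T$ of pairwise non-crossing arcs such that every connected component of $P_n^\bullet\setminus T$ is an $(m+2)$-gon (sides counted with multiplicity, so e.g. a self-folded triangle counts as a triangle). *)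

theory Defs
  imports Main
begin

text \<open>Combinatorial model of arcs in the once-punctured polygon with n boundary
marked points v_0..v_(n-1) (clockwise, indices mod n) and one puncture.
  Spoke i   : the arc from v_i to the puncture (0 <= i < n).
  Chord i k : the arc from v_i to v_(i+k mod n) such that the component of the
              complement NOT containing the puncture has on its boundary the
              boundary segments from v_i clockwise to v_(i+k); 2 <= k <= n
              (k = 1 would be a boundary segment, k = n is the loop at v_i
              around the puncture).\<close>

datatype parc = Spoke nat | Chord nat nat

definition arcs :: "nat \<Rightarrow> parc set" where
  "arcs n = {Spoke i | i. i < n} \<union> {Chord i k | i k. i < n \<and> 2 \<le> k \<and> k \<le> n}"

text \<open>Lifts to the universal cover of the disc minus the puncture: the boundary
lifts to the integer line (v_i lifts to all i + t n), a chord lifts to the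
intervals [a, a+k], a spoke lifts to vertical rays at i + t n.\<close>

definition lift_chords :: "nat \<Rightarrow> parc set \<Rightarrow> (int \<times> int) set" where
  "lift_chords n T = {(int i + t * int n, int i + t * int n + int k) | i k t. Chord i k \<in> T}"

definition lift_rays :: "nat \<Rightarrow> parc set \<Rightarrow> int set" where
  "lift_rays n T = {int i + t * int n | i t. Spoke i \<in> T}"

definition noncrossing :: "nat \<Rightarrow> parc set \<Rightarrow> bool" where
  "noncrossing n T \<longleftrightarrow>
     (\<forall>(a, b) \<in> lift_chords n T. \<forall>(c, d) \<in> lift_chords n T. \<not> (a < c \<and> c < b \<and> b < d)) \<and>
     (\<forall>(a, b) \<in> lift_chords n T. \<forall>r \<in> lift_rays n T. \<not> (a < r \<and> r < b))"

text \<open>Number of sides of the part of a face lying along the boundary interval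
[x, y]: the maximal chords of C inside [x, y] plus the unit boundary segments
of [x, y] not covered by any chord of C inside [x, y].\<close>

definition within :: "(int \<times> int) set \<Rightarrow> int \<Rightarrow> int \<Rightarrow> (int \<times> int) set" where
  "within C x y = {(c, d) \<in> C. x \<le> c \<and> d \<le> y}"

definition pieces :: "(int \<times> int) set \<Rightarrow> int \<Rightarrow> int \<Rightarrow> nat" where
  "pieces C x y =
     card {(c, d) \<in> within C x y. \<not> (\<exists>(c', d') \<in> within C x y. (c', d') \<noteq> (c, d) \<and> c' \<le> c \<and> d \<le> d')}
   + card {t. x \<le> t \<and> t + 1 \<le> y \<and> \<not> (\<exists>(c, d) \<in> within C x y. c \<le> t \<and> t + 1 \<le> d)}"

text \<open>When T contains a spoke, every face lifts homeomorphically;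
a face is either directly below a lifted chord (a,b) (sides: the chord itself plus
the pieces of [a,b]) or lies between two consecutive lifted rays r < r' (sides:
the two rays plus the pieces of [r,r']). Without spokes the face containing the
puncture is not a polygon, so such T are not (m+2)-angulations.\<close>

definition is_angulation :: "nat \<Rightarrow> nat \<Rightarrow> parc set \<Rightarrow> bool" where
  "is_angulation m n T \<longleftrightarrow>
     T \<subseteq> arcs n \<and> noncrossing n T \<and> lift_rays n T \<noteq> {} \<and>
     (\<forall>(a, b) \<in> lift_chords n T. 1 + pieces (lift_chords n T - {(a, b)}) a b = m + 2) \<and>
     (\<forall>r \<in> lift_rays n T. \<forall>r' \<in> lift_rays n T.
        r < r' \<and> \<not> (\<exists>r'' \<in> lift_rays n T. r < r'' \<and> r'' < r') \<longrightarrow>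
        2 + pieces (lift_chords n T) r r' = m + 2)"

definition num_spokes :: "parc set \<Rightarrow> nat" where
  "num_spokes T = card {i. Spoke i \<in> T}"

end

theory Submission
  imports Defs
begin

definition lam :: "(int \<times> int) set \<Rightarrow> bool" where
  "lam F \<longleftrightarrow> (\<forall>(a,b)\<in>F. \<forall>(c,d)\<in>F. \<not>(a<c \<and> c<b \<and> b<d)) \<and> (\<forall>(a,b)\<in>F. a<b)"

lemma mem_within: "p \<in> within C x y \<longleftrightarrow> p \<in> C \<and> x \<le> fst p \<and> snd p \<le> y"
  by (cases p) (auto simp: within_def)

lemma lamD1: "lam F \<Longrightarrow> (a,b) \<in> F \<Longrightarrow> (c,d) \<in> F \<Longrightarrow> \<not>(a<c \<and> c<b \<and> b<d)"
  unfolding lam_def by blast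

lemma lamD2: "lam F \<Longrightarrow> p \<in> F \<Longrightarrow> fst p < snd p"
  unfolding lam_def by auto

lemma lam_subset: "lam F \<Longrightarrow> G \<subseteq> F \<Longrightarrow> lam G"
  unfolding lam_def by blast

lemma finite_within: assumes "lam C" shows "finite (within C x y)"
proof -
  have "within C x y \<subseteq> {x..y} \<times> {x..y}"
    using lamD2[OF assms] by (force simp: mem_within)
  then show ?thesis by (rule finite_subset) auto
qed

lemma nest:
  assumes "lam F" "p \<in> F" "q \<in> F" "fst p \<le> t" "t+1 \<le> snd p" "fst q \<le> t" "t+1 \<le> snd q"
  shows "(fst p \<le> fst q \<and> snd q \<le> snd p) \<or> (fst q \<le> fst p \<and> snd p \<le> snd q)"
proof -
  obtain a b c d where p: "p = (a,b)" and q: "q = (c,d)" by (cases p, cases q)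
  have 1: "\<not>(a<c \<and> c<b \<and> b<d)" using lamD1[OF assms(1)] assms(2,3) p q by blast
  have 2: "\<not>(c<a \<and> a<d \<and> d<b)" using lamD1[OF assms(1)] assms(2,3) p q by blast
  show ?thesis using 1 2 assms(4-7) p q by auto
qed

lemma decomp:
  fixes F :: "(int \<times> int) set" and m :: nat
  assumes lamF: "lam F" and xy: "x \<le> y"
    and hyp: "\<forall>p\<in>within F x y. int m * int (card (within F (fst p) (snd p))) - (snd p - fst p) = -1"
  shows "int m * int (card (within F x y)) - (y - x) = - int (pieces F x y)"
proof -
  define Wi where "Wi = within F x y"
  define Mx where "Mx = {(c, d) \<in> within F x y. \<not> (\<exists>(c', d') \<in> within F x y. (c', d') \<noteq> (c, d) \<and> c' \<le> c \<and> d \<le> d')}"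
  define Uc where "Uc = {t. x \<le> t \<and> t + 1 \<le> y \<and> \<not> (\<exists>(c, d) \<in> within F x y. c \<le> t \<and> t + 1 \<le> d)}"
  have pc: "pieces F x y = card Mx + card Uc"
    unfolding pieces_def Mx_def Uc_def by (rule refl)
  have finW: "finite Wi" unfolding Wi_def by (rule finite_within[OF lamF])
  have MxW: "Mx \<subseteq> Wi" unfolding Mx_def Wi_def by auto
  have finM: "finite Mx" using finW MxW finite_subset by blast
  have Mx_mem: "M \<in> Mx \<longleftrightarrow> M \<in> Wi \<and> (\<forall>q\<in>Wi. q \<noteq> M \<longrightarrow> \<not>(fst q \<le> fst M \<and> snd M \<le> snd q))" for M
    unfolding Mx_def Wi_def by (cases M) auto
  have WiF: "q \<in> Wi \<Longrightarrow> q \<in> F \<and> x \<le> fst q \<and> snd q \<le> y" for q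
    unfolding Wi_def by (simp add: mem_within)
  have above: "\<exists>M\<in>Mx. fst M \<le> fst e \<and> snd e \<le> snd M" if e: "e \<in> Wi" for e
  proof -
    define E where "E = {q\<in>Wi. fst q \<le> fst e \<and> snd e \<le> snd q}"
    have finE: "finite E" using finW unfolding E_def by auto
    have eE: "e \<in> E" using e unfolding E_def by auto
    define L where "L = Max ((\<lambda>q. snd q - fst q) ` E)"
    have "L \<in> (\<lambda>q. snd q - fst q) ` E" unfolding L_def using finE eE by (intro Max_in) auto
    then obtain M where ME: "M \<in> E" and Mlen: "snd M - fst M = L" by auto
    have Lmax: "q \<in> E \<Longrightarrow> snd q - fst q \<le> L" for q unfolding L_def using finE by (intro Max_ge) auto
    have "M \<in> Mx"
    proof -
      have "\<not>(fst q \<le> fst M \<and> snd M \<le> snd q)" if "q \<in> Wi" "q \<noteq> M" for q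
      proof
        assume h: "fst q \<le> fst M \<and> snd M \<le> snd q"
        then have "q \<in> E" using that ME unfolding E_def by auto
        then have "snd q - fst q \<le> L" by (rule Lmax)
        moreover have "snd q - fst q > snd M - fst M"
          using h that(2) prod_eq_iff[of q M] by auto
        ultimately show False using Mlen by simp
      qed
      then show ?thesis using ME unfolding Mx_mem E_def by auto
    qed
    then show ?thesis using ME unfolding E_def by auto
  qed
  have disj: "M1 = M2" if "M1 \<in> Mx" "M2 \<in> Mx" "fst M1 \<le> t" "t+1 \<le> snd M1" "fst M2 \<le> t" "t+1 \<le> snd M2" for M1 M2 t
  proof (rule ccontr)
    assume ne: "M1 \<noteq> M2"
    have "M1 \<in> F" "M2 \<in> F" using that(1,2) MxW WiF by blast+
    from nest[OF lamF this that(3-6)]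
    show False using that(1,2) ne unfolding Mx_mem by metis
  qed
  have WiU: "Wi = (\<Union>M\<in>Mx. within F (fst M) (snd M))"
  proof
    show "Wi \<subseteq> (\<Union>M\<in>Mx. within F (fst M) (snd M))"
    proof
      fix e assume e: "e \<in> Wi"
      from above[OF e] obtain M where "M \<in> Mx" "fst M \<le> fst e" "snd e \<le> snd M" by blast
      then show "e \<in> (\<Union>M\<in>Mx. within F (fst M) (snd M))" using WiF[OF e] by (auto simp: mem_within)
    qed
    show "(\<Union>M\<in>Mx. within F (fst M) (snd M)) \<subseteq> Wi"
      using MxW WiF unfolding Wi_def by (force simp: mem_within)
  qed
  have cardW: "card Wi = (\<Sum>M\<in>Mx. card (within F (fst M) (snd M)))"
    unfolding WiU
  proof (rule card_UN_disjoint[OF finM])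
    show "\<forall>M\<in>Mx. finite (within F (fst M) (snd M))" using finite_within[OF lamF] by blast
    show "\<forall>M1\<in>Mx. \<forall>M2\<in>Mx. M1 \<noteq> M2 \<longrightarrow> within F (fst M1) (snd M1) \<inter> within F (fst M2) (snd M2) = {}"
    proof (intro ballI impI)
      fix M1 M2 assume h: "M1 \<in> Mx" "M2 \<in> Mx" "M1 \<noteq> M2"
      show "within F (fst M1) (snd M1) \<inter> within F (fst M2) (snd M2) = {}"
      proof (rule ccontr)
        assume "within F (fst M1) (snd M1) \<inter> within F (fst M2) (snd M2) \<noteq> {}"
        then obtain e where e: "e \<in> F" "fst M1 \<le> fst e" "snd e \<le> snd M1" "fst M2 \<le> fst e" "snd e \<le> snd M2"
          by (auto simp: mem_within)
        have "fst e < snd e" using lamD2[OF lamF e(1)] .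
        then show False using disj[OF h(1,2), of "fst e"] e h(3) by auto
      qed
    qed
  qed
  have segU: "{x..<y} = Uc \<union> (\<Union>M\<in>Mx. {fst M..<snd M})"
  proof
    show "{x..<y} \<subseteq> Uc \<union> (\<Union>M\<in>Mx. {fst M..<snd M})"
    proof
      fix t assume t: "t \<in> {x..<y}"
      show "t \<in> Uc \<union> (\<Union>M\<in>Mx. {fst M..<snd M})"
      proof (cases "t \<in> Uc")
        case False
        then obtain e where e: "e \<in> Wi" "fst e \<le> t" "t + 1 \<le> snd e"
          using t unfolding Uc_def Wi_def by auto
        from above[OF e(1)] obtain M where "M \<in> Mx" "fst M \<le> fst e" "snd e \<le> snd M" by blast
        then have "t \<in> {fst M..<snd M}" using e by auto
        then show ?thesis using \<open>M \<in> Mx\<close> by blast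
      qed simp
    qed
    show "Uc \<union> (\<Union>M\<in>Mx. {fst M..<snd M}) \<subseteq> {x..<y}"
      using MxW WiF unfolding Uc_def by force
  qed
  have finU: "finite Uc" unfolding Uc_def by (rule finite_subset[of _ "{x..<y}"]) auto
  have cardS: "card {x..<y} = card Uc + (\<Sum>M\<in>Mx. card {fst M..<snd M})"
  proof -
    have d1: "Uc \<inter> (\<Union>M\<in>Mx. {fst M..<snd M}) = {}"
    proof -
      have "t \<notin> Uc" if "M \<in> Mx" "fst M \<le> t" "t < snd M" for M t
        using that MxW unfolding Uc_def Wi_def by force
      then show ?thesis by auto
    qed
    have "card (\<Union>M\<in>Mx. {fst M..<snd M}) = (\<Sum>M\<in>Mx. card {fst M..<snd M})"
    proof (rule card_UN_disjoint[OF finM])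
      show "\<forall>M\<in>Mx. finite {fst M..<snd M}" by simp
      show "\<forall>M1\<in>Mx. \<forall>M2\<in>Mx. M1 \<noteq> M2 \<longrightarrow> {fst M1..<snd M1} \<inter> {fst M2..<snd M2} = {}"
        using disj by fastforce
    qed
    then show ?thesis unfolding segU using d1 finU finM by (simp add: card_Un_disjoint)
  qed
  have "int m * int (card Wi) - (y - x) = (\<Sum>M\<in>Mx. (int m * int (card (within F (fst M) (snd M))) - (snd M - fst M))) - int (card Uc)"
  proof -
    have "y - x = int (card Uc) + (\<Sum>M\<in>Mx. (snd M - fst M))"
    proof -
      have "y - x = int (card {x..<y})" using xy by simp
      also have "\<dots> = int (card Uc) + (\<Sum>M\<in>Mx. int (card {fst M..<snd M}))"
        unfolding cardS by simp
      also have "(\<Sum>M\<in>Mx. int (card {fst M..<snd M})) = (\<Sum>M\<in>Mx. (snd M - fst M))"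
      proof (rule sum.cong)
        fix M assume "M \<in> Mx"
        then have "fst M < snd M" using MxW WiF lamD2[OF lamF] by blast
        then show "int (card {fst M..<snd M}) = snd M - fst M" by simp
      qed simp
      finally show ?thesis .
    qed
    then show ?thesis unfolding cardW by (simp add: sum_subtractf sum_distrib_left)
  qed
  also have "\<dots> = (\<Sum>M\<in>Mx. (-1::int)) - int (card Uc)"
  proof -
    have "(\<Sum>M\<in>Mx. (int m * int (card (within F (fst M) (snd M))) - (snd M - fst M))) = (\<Sum>M\<in>Mx. (-1::int))"
      using hyp MxW unfolding Wi_def by (intro sum.cong) auto
    then show ?thesis by simp
  qed
  finally show ?thesis unfolding pc Wi_def by simp
qed

lemma pieces_pos:
  assumes lamF: "lam F" and xy: "x < y"
  shows "pieces F x y \<ge> 1"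
proof -
  define Mx where "Mx = {(c, d) \<in> within F x y. \<not> (\<exists>(c', d') \<in> within F x y. (c', d') \<noteq> (c, d) \<and> c' \<le> c \<and> d \<le> d')}"
  define Uc where "Uc = {t. x \<le> t \<and> t + 1 \<le> y \<and> \<not> (\<exists>(c, d) \<in> within F x y. c \<le> t \<and> t + 1 \<le> d)}"
  have pc: "pieces F x y = card Mx + card Uc"
    unfolding pieces_def Mx_def Uc_def by (rule refl)
  show ?thesis
  proof (cases "x \<in> Uc")
    case True
    have "finite Uc" unfolding Uc_def by (rule finite_subset[of _ "{x..<y}"]) auto
    then have "card Uc \<ge> 1" using True by (metis One_nat_def Suc_leI card_gt_0_iff empty_iff)
    then show ?thesis unfolding pc by simp
  next
    case False
    then obtain e where e: "e \<in> within F x y" using xy unfolding Uc_def by auto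
    have finW: "finite (within F x y)" by (rule finite_within[OF lamF])
    define L where "L = Max ((\<lambda>q. snd q - fst q) ` within F x y)"
    have "L \<in> (\<lambda>q. snd q - fst q) ` within F x y" unfolding L_def using finW e by (intro Max_in) auto
    then obtain M where ME: "M \<in> within F x y" and Mlen: "snd M - fst M = L" by auto
    have Lmax: "q \<in> within F x y \<Longrightarrow> snd q - fst q \<le> L" for q unfolding L_def using finW by (intro Max_ge) auto
    have "M \<in> Mx"
    proof -
      have "\<not>(fst q \<le> fst M \<and> snd M \<le> snd q)" if "q \<in> within F x y" "q \<noteq> M" for q
      proof
        assume h: "fst q \<le> fst M \<and> snd M \<le> snd q"
        have "snd q - fst q \<le> L" using that(1) by (rule Lmax)
        moreover have "snd q - fst q > snd M - fst M"
          using h that(2) prod_eq_iff[of q M] by auto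
        ultimately show False using Mlen by simp
      qed
      then show ?thesis using ME unfolding Mx_def by (cases M) fastforce
    qed
    moreover have "finite Mx" unfolding Mx_def using finW by (rule rev_finite_subset) auto
    ultimately have "card Mx \<ge> 1" by (metis One_nat_def Suc_leI card_gt_0_iff empty_iff)
    then show ?thesis unfolding pc by simp
  qed
qed

definition stp :: "nat \<Rightarrow> (int \<Rightarrow> nat) \<Rightarrow> int \<Rightarrow> int" where
  "stp m A u = int m * int (A u) - 1"

definition W :: "nat \<Rightarrow> (int \<Rightarrow> nat) \<Rightarrow> int \<Rightarrow> int" where
  "W m A t = (if 0 \<le> t then (\<Sum>u\<in>{0..<t}. stp m A u) else - (\<Sum>u\<in>{t..<0}. stp m A u))"

lemma W_succ: "W m A (t+1) = W m A t + stp m A t"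
proof (cases "0 \<le> t")
  case True
  have "{0..<t+1} = insert t {0..<t}" using True by auto
  then show ?thesis using True by (simp add: W_def)
next
  case False
  show ?thesis
  proof (cases "t = -1")
    case True
    have "{-1..<0::int} = {-1}" by auto
    then show ?thesis using True by (simp add: W_def)
  next
    case False2: False
    have "{t..<0} = insert t {t+1..<0}" using False by auto
    then show ?thesis using False False2 by (simp add: W_def)
  qed
qed

lemma W_diff: assumes "x \<le> y" shows "W m A y - W m A x = (\<Sum>u\<in>{x..<y}. stp m A u)"
  using assms
proof (induction y rule: int_ge_induct)
  case base then show ?case by simp
next
  case (step y)
  have "{x..<y+1} = insert y {x..<y}" using step.hyps by auto
  then show ?case using step by (simp add: W_succ)
qed

lemma W_diffA: assumes "x \<le> y"
  shows "W m A y - W m A x = int m * (\<Sum>u\<in>{x..<y}. int (A u)) - (y - x)"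
  using assms by (simp add: W_diff stp_def sum_subtractf sum_distrib_left)

lemma W_step_ge: "W m A (t+1) \<ge> W m A t - 1"
proof -
  have "0 \<le> int m * int (A t)" by simp
  then show ?thesis unfolding W_succ stp_def by linarith
qed

lemma arcs_Chord: "Chord i k \<in> arcs n \<longleftrightarrow> i < n \<and> 2 \<le> k \<and> k \<le> n"
  by (auto simp: arcs_def)
lemma arcs_Spoke: "Spoke i \<in> arcs n \<longleftrightarrow> i < n"
  by (auto simp: arcs_def)

lemma lift_chords_iff:
  assumes "T \<subseteq> arcs n" "n > 0"
  shows "(a,b) \<in> lift_chords n T \<longleftrightarrow> a \<le> b \<and> Chord (nat (a mod int n)) (nat (b - a)) \<in> T"
proof
  assume "(a,b) \<in> lift_chords n T"
  then obtain i k t where h: "Chord i k \<in> T" "a = int i + t * int n" "b = int i + t * int n + int k"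
    unfolding lift_chords_def by blast
  have "i < n" using h(1) assms(1) arcs_Chord by blast
  then have "a mod int n = int i" using h(2) by simp
  then show "a \<le> b \<and> Chord (nat (a mod int n)) (nat (b - a)) \<in> T" using h by simp
next
  assume h: "a \<le> b \<and> Chord (nat (a mod int n)) (nat (b - a)) \<in> T"
  have "a = int (nat (a mod int n)) + (a div int n) * int n" using assms(2) by simp
  moreover have "b = int (nat (a mod int n)) + (a div int n) * int n + int (nat (b - a))" using assms(2) h by simp
  ultimately show "(a,b) \<in> lift_chords n T" using h unfolding lift_chords_def by blast
qed

lemma lift_rays_iff:
  assumes "T \<subseteq> arcs n" "n > 0"
  shows "r \<in> lift_rays n T \<longleftrightarrow> Spoke (nat (r mod int n)) \<in> T"
proof
  assume "r \<in> lift_rays n T"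
  then obtain i t where h: "Spoke i \<in> T" "r = int i + t * int n"
    unfolding lift_rays_def by blast
  have "i < n" using h(1) assms(1) arcs_Spoke by blast
  then have "r mod int n = int i" using h(2) by simp
  then show "Spoke (nat (r mod int n)) \<in> T" using h by simp
next
  assume h: "Spoke (nat (r mod int n)) \<in> T"
  have "r = int (nat (r mod int n)) + (r div int n) * int n" using assms(2) by simp
  then show "r \<in> lift_rays n T" using h unfolding lift_rays_def by blast
qed

lemma lift_chords_bounds:
  assumes "T \<subseteq> arcs n" "n > 0" "(a,b) \<in> lift_chords n T"
  shows "a + 2 \<le> b \<and> b \<le> a + int n"
proof -
  have "a \<le> b" "Chord (nat (a mod int n)) (nat (b - a)) \<in> T" using assms lift_chords_iff by blast+
  then have "2 \<le> nat (b - a)" "nat (b - a) \<le> n" using assms(1) arcs_Chord by blast+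
  then show ?thesis by linarith
qed

lemma lift_chords_shift:
  assumes "T \<subseteq> arcs n" "n > 0" "(a,b) \<in> lift_chords n T"
  shows "(a + t * int n, b + t * int n) \<in> lift_chords n T"
  using assms lift_chords_iff[OF assms(1,2)] by simp

lemma lift_rays_shift:
  assumes "T \<subseteq> arcs n" "n > 0" "r \<in> lift_rays n T"
  shows "r + t * int n \<in> lift_rays n T"
  using assms lift_rays_iff[OF assms(1,2)] by simp

definition Aof :: "nat \<Rightarrow> parc set \<Rightarrow> int \<Rightarrow> nat" where
  "Aof n T u = card {k. Chord (nat (u mod int n)) k \<in> T}"

definition jof :: "nat \<Rightarrow> nat \<Rightarrow> parc set \<Rightarrow> int" where
  "jof m n T = W m (Aof n T) (int (LEAST i. Spoke i \<in> T)) mod int m"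

definition Chords :: "nat \<Rightarrow> (int \<Rightarrow> nat) \<Rightarrow> (int \<times> int) set" where
  "Chords m A = {(c,d). c < d \<and> (\<exists>p::nat. 1 \<le> p \<and> p \<le> A c \<and> W m A d = W m A c + int m * (int p - 1) - 1)
      \<and> (\<forall>u. c < u \<and> u < d \<longrightarrow> W m A u > W m A d)}"

definition Rays :: "nat \<Rightarrow> (int \<Rightarrow> nat) \<Rightarrow> int \<Rightarrow> int set" where
  "Rays m A j = {r. (\<forall>u<r. W m A u > W m A r) \<and> W m A r mod int m = j}"

lemma bij_mod_window:
  assumes "n > 0"
  shows "bij_betw (\<lambda>u. u mod int n) {a..<a + int n} {0..<int n}"
proof (rule bij_betw_imageI)
  show "inj_on (\<lambda>u. u mod int n) {a..<a + int n}"
  proof (rule inj_onI)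
    fix u v assume h: "u \<in> {a..<a + int n}" "v \<in> {a..<a + int n}" "u mod int n = v mod int n"
    then have "int n dvd (u - v)" by (simp add: mod_eq_dvd_iff)
    then obtain k where k: "u - v = int n * k" by blast
    have "\<bar>u - v\<bar> < int n" using h(1,2) by auto
    then have "int n * \<bar>k\<bar> < int n * 1" using k by (simp add: abs_mult)
    then have "\<bar>k\<bar> < 1" using assms mult_less_cancel_left_pos[of "int n" "\<bar>k\<bar>" 1] by simp
    then have "k = 0" by simp
    then show "u = v" using k by simp
  qed
  show "(\<lambda>u. u mod int n) ` {a..<a + int n} = {0..<int n}"
  proof
    show "(\<lambda>u. u mod int n) ` {a..<a + int n} \<subseteq> {0..<int n}" using assms by auto
    show "{0..<int n} \<subseteq> (\<lambda>u. u mod int n) ` {a..<a + int n}"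
    proof
      fix y assume y: "y \<in> {0..<int n}"
      define u where "u = a + (y - a) mod int n"
      have "u mod int n = (a + (y - a)) mod int n" unfolding u_def by (simp add: mod_add_right_eq)
      also have "\<dots> = y" using y by simp
      finally have "u mod int n = y" .
      moreover have "u \<in> {a..<a + int n}" unfolding u_def using assms by simp
      ultimately show "y \<in> (\<lambda>u. u mod int n) ` {a..<a + int n}" by force
    qed
  qed
qed

lemma sum_window:
  assumes "n > 0" "\<And>u. f u = f (u mod int n)"
  shows "(\<Sum>u\<in>{a..<a + int n}. f u) = (\<Sum>u\<in>{0..<int n}. f u)"
proof -
  have "(\<Sum>u\<in>{0..<int n}. f u) = (\<Sum>u\<in>{a..<a + int n}. f (u mod int n))"
    using sum.reindex_bij_betw[OF bij_mod_window[OF assms(1), of a], of f] by simp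
  also have "\<dots> = (\<Sum>u\<in>{a..<a + int n}. f u)" using assms(2) by simp
  finally show ?thesis by simp
qed

lemma card_window:
  assumes "n > 0" "\<And>u. u \<in> P \<longleftrightarrow> u mod int n \<in> P"
  shows "card (P \<inter> {a..<a + int n}) = card (P \<inter> {0..<int n})"
proof -
  have cs: "card (P \<inter> S) = (\<Sum>u\<in>S. if u \<in> P then 1 else 0)" if "finite S" for S
    using that by (simp add: sum.inter_restrict[symmetric] Int_commute)
  have "card (P \<inter> {a..<a + int n}) = (\<Sum>u\<in>{a..<a + int n}. if u \<in> P then 1 else 0)"
    by (rule cs) simp
  also have "\<dots> = (\<Sum>u\<in>{0..<int n}. if u \<in> P then 1 else 0)"
    by (rule sum_window[OF assms(1)]) (use assms(2) in auto)
  also have "\<dots> = card (P \<inter> {0..<int n})"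
    by (rule cs[symmetric]) simp
  finally show ?thesis .
qed

locale valid =
  fixes m n :: nat and T :: "parc set"
  assumes m1: "m \<ge> 1" and n1: "n \<ge> 1" and ang: "is_angulation m n T"
begin

abbreviation "CC \<equiv> lift_chords n T"
abbreviation "RR \<equiv> lift_rays n T"
abbreviation "AA \<equiv> Aof n T"
abbreviation "WW \<equiv> W m AA"

lemma npos: "n > 0" using n1 by simp

lemma Tarcs: "T \<subseteq> arcs n" using ang unfolding is_angulation_def by blast

lemma CC_iff: "(a,b) \<in> CC \<longleftrightarrow> a \<le> b \<and> Chord (nat (a mod int n)) (nat (b - a)) \<in> T"
  by (rule lift_chords_iff[OF Tarcs npos])

lemma RR_iff: "r \<in> RR \<longleftrightarrow> Spoke (nat (r mod int n)) \<in> T"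
  by (rule lift_rays_iff[OF Tarcs npos])

lemma CC_bounds: "(a,b) \<in> CC \<Longrightarrow> a + 2 \<le> b \<and> b \<le> a + int n"
  by (rule lift_chords_bounds[OF Tarcs npos])

lemma RR_shift: "r \<in> RR \<Longrightarrow> r + t * int n \<in> RR"
  by (rule lift_rays_shift[OF Tarcs npos])

lemma RR_ne: "RR \<noteq> {}" using ang unfolding is_angulation_def by blast

lemma nc: "(a,b) \<in> CC \<Longrightarrow> (c,d) \<in> CC \<Longrightarrow> \<not>(a<c \<and> c<b \<and> b<d)"
  using ang unfolding is_angulation_def noncrossing_def by blast

lemma noray: "(a,b) \<in> CC \<Longrightarrow> r \<in> RR \<Longrightarrow> \<not>(a<r \<and> r<b)"
  using ang unfolding is_angulation_def noncrossing_def by blast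

lemma lamC: "lam CC"
  unfolding lam_def using nc CC_bounds by fastforce

lemma chord_cond: "(a,b) \<in> CC \<Longrightarrow> pieces (CC - {(a,b)}) a b = m + 1"
  using ang unfolding is_angulation_def by fastforce

lemma gap_cond: "r \<in> RR \<Longrightarrow> r' \<in> RR \<Longrightarrow> r < r' \<Longrightarrow> \<not>(\<exists>r''\<in>RR. r < r'' \<and> r'' < r') \<Longrightarrow> pieces CC r r' = m"
  using ang unfolding is_angulation_def by fastforce

lemma next_ray: assumes "r \<in> RR"
  shows "\<exists>r'. r' \<in> RR \<and> r < r' \<and> (\<forall>\<rho>\<in>RR. r < \<rho> \<longrightarrow> r' \<le> \<rho>)"
proof -
  define K0 where "K0 = {k::nat. k > 0 \<and> r + int k \<in> RR}"
  have "n \<in> K0" using RR_shift[OF assms, of 1] npos unfolding K0_def by simp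
  then have k0: "(LEAST k. k \<in> K0) \<in> K0" by (rule LeastI)
  define k0 where "k0 = (LEAST k. k \<in> K0)"
  have kmin: "k \<in> K0 \<Longrightarrow> k0 \<le> k" for k unfolding k0_def by (rule Least_le)
  have "r + int k0 \<in> RR" "0 < k0" using k0 unfolding K0_def k0_def by auto
  moreover have "r + int k0 \<le> \<rho>" if "\<rho> \<in> RR" "r < \<rho>" for \<rho>
  proof -
    have "nat (\<rho> - r) \<in> K0" using that unfolding K0_def by simp
    then have "k0 \<le> nat (\<rho> - r)" by (rule kmin)
    then show ?thesis using that by linarith
  qed
  ultimately show ?thesis by (intro exI[of _ "r + int k0"]) auto
qed

lemma prev_ray: "\<exists>r\<in>RR. r \<le> u \<and> (\<forall>\<rho>\<in>RR. \<rho> \<le> u \<longrightarrow> \<rho> \<le> r)"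
proof -
  obtain r0 where r0: "r0 \<in> RR" using RR_ne by blast
  define r1 where "r1 = r0 + (- (\<bar>r0\<bar> + \<bar>u\<bar>)) * int n"
  have r1R: "r1 \<in> RR" unfolding r1_def by (rule RR_shift[OF r0])
  have "(\<bar>r0\<bar> + \<bar>u\<bar>) \<le> (\<bar>r0\<bar> + \<bar>u\<bar>) * int n" using mult_left_mono[of 1 "int n" "\<bar>r0\<bar> + \<bar>u\<bar>"] n1 by simp
  moreover have "r1 = r0 - (\<bar>r0\<bar> + \<bar>u\<bar>) * int n" unfolding r1_def by (simp add: algebra_simps)
  ultimately have r1u: "r1 \<le> u" using abs_ge_self[of r0] abs_ge_minus_self[of u] by linarith
  define K1 where "K1 = {k::nat. u - int k \<in> RR}"
  have "nat (u - r1) \<in> K1" using r1R r1u unfolding K1_def by simp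
  then have k1: "(LEAST k. k \<in> K1) \<in> K1" by (rule LeastI)
  define k1 where "k1 = (LEAST k. k \<in> K1)"
  have kmin: "k \<in> K1 \<Longrightarrow> k1 \<le> k" for k unfolding k1_def by (rule Least_le)
  have "u - int k1 \<in> RR" using k1 unfolding K1_def k1_def by auto
  moreover have "\<rho> \<le> u - int k1" if "\<rho> \<in> RR" "\<rho> \<le> u" for \<rho>
  proof -
    have "nat (u - \<rho>) \<in> K1" using that unfolding K1_def by simp
    then have "k1 \<le> nat (u - \<rho>)" by (rule kmin)
    then show ?thesis using that by linarith
  qed
  ultimately show ?thesis by (intro bexI[of _ "u - int k1"]) auto
qed

lemma S_chord: "p \<in> CC \<Longrightarrow> int m * int (card (within CC (fst p) (snd p))) - (snd p - fst p) = -1"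
proof (induction "nat (snd p - fst p)" arbitrary: p rule: less_induct)
  case less
  obtain a b where p: "p = (a,b)" by (cases p)
  define F where "F = CC - {p}"
  have lamF: "lam F" unfolding F_def by (rule lam_subset[OF lamC]) auto
  have ab: "a < b" using CC_bounds less.prems p by force
  have hyp: "\<forall>q\<in>within F a b. int m * int (card (within F (fst q) (snd q))) - (snd q - fst q) = -1"
  proof
    fix q assume q: "q \<in> within F a b"
    have qC: "q \<in> CC" "q \<noteq> p" "a \<le> fst q" "snd q \<le> b" using q unfolding F_def by (auto simp: mem_within)
    have fq: "fst q < snd q" using lamD2[OF lamC qC(1)] .
    have "fst q \<noteq> a \<or> snd q \<noteq> b" using qC(2) p prod_eq_iff[of q p] by auto
    then have "nat (snd q - fst q) < nat (snd p - fst p)" using qC fq p by auto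
    then have IH: "int m * int (card (within CC (fst q) (snd q))) - (snd q - fst q) = -1"
      using less.hyps qC(1) by blast
    have "within F (fst q) (snd q) = within CC (fst q) (snd q)"
    proof -
      have "p \<notin> within CC (fst q) (snd q)"
      proof
        assume "p \<in> within CC (fst q) (snd q)"
        then have "fst q \<le> a" "b \<le> snd q" using p by (auto simp: mem_within)
        then show False using qC p prod_eq_iff[of q p] by auto
      qed
      then show ?thesis unfolding F_def within_def by auto
    qed
    then show "int m * int (card (within F (fst q) (snd q))) - (snd q - fst q) = -1" using IH by simp
  qed
  have "int m * int (card (within F a b)) - (b - a) = - int (pieces F a b)"
    using decomp[OF lamF _ hyp] ab by simp
  also have "pieces F a b = m + 1" using chord_cond less.prems p unfolding F_def by simp
  finally have e1: "int m * int (card (within F a b)) - (b - a) = - int m - 1" by simp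
  have "within F a b = within CC a b - {p}" unfolding F_def within_def by auto
  moreover have "p \<in> within CC a b" using less.prems p by (simp add: mem_within)
  moreover have "finite (within CC a b)" by (rule finite_within[OF lamC])
  ultimately have "card (within CC a b) = card (within F a b) + 1"
    by (metis One_nat_def add.right_neutral add_Suc_right card.remove)
  then show ?case using e1 p by (simp add: algebra_simps)
qed

lemma AA_card: "AA u = card {d. (u,d) \<in> CC}"
proof -
  have "bij_betw (\<lambda>d. nat (d - u)) {d. (u,d) \<in> CC} {k. Chord (nat (u mod int n)) k \<in> T}"
  proof (rule bij_betw_imageI)
    show "inj_on (\<lambda>d. nat (d - u)) {d. (u, d) \<in> CC}"
    proof (rule inj_onI)
      fix x y assume "x \<in> {d. (u, d) \<in> CC}" "y \<in> {d. (u, d) \<in> CC}" "nat (x - u) = nat (y - u)"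
      then have "u \<le> x" "u \<le> y" "nat (x - u) = nat (y - u)" by (auto simp: CC_iff)
      then show "x = y" using eq_nat_nat_iff[of "x-u" "y-u"] by simp
    qed
    show "(\<lambda>d. nat (d - u)) ` {d. (u, d) \<in> CC} = {k. Chord (nat (u mod int n)) k \<in> T}"
    proof
      show "(\<lambda>d. nat (d - u)) ` {d. (u, d) \<in> CC} \<subseteq> {k. Chord (nat (u mod int n)) k \<in> T}"
        by (auto simp: CC_iff)
      show "{k. Chord (nat (u mod int n)) k \<in> T} \<subseteq> (\<lambda>d. nat (d - u)) ` {d. (u, d) \<in> CC}"
      proof
        fix k assume "k \<in> {k. Chord (nat (u mod int n)) k \<in> T}"
        then have "(u, u + int k) \<in> CC" by (simp add: CC_iff)
        then show "k \<in> (\<lambda>d. nat (d - u)) ` {d. (u, d) \<in> CC}" by force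
      qed
    qed
  qed
  then show ?thesis unfolding Aof_def by (simp add: bij_betw_same_card)
qed

lemma finite_Ds: "finite {d. (u,d) \<in> CC}"
proof -
  have "{d. (u,d) \<in> CC} \<subseteq> {u..u + int n}" using CC_bounds by force
  then show ?thesis by (rule finite_subset) simp
qed

lemma starts_card: "x \<le> y \<Longrightarrow> (\<Sum>u\<in>{x..<y}. int (AA u)) = int (card {p\<in>CC. x \<le> fst p \<and> fst p < y})"
proof -
  have e: "{p\<in>CC. x \<le> fst p \<and> fst p < y} = (\<Union>u\<in>{x..<y}. Pair u ` {d. (u,d) \<in> CC})"
    by force
  have "card (\<Union>u\<in>{x..<y}. Pair u ` {d. (u,d) \<in> CC}) = (\<Sum>u\<in>{x..<y}. card (Pair u ` {d. (u,d) \<in> CC}))"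
    by (rule card_UN_disjoint) (auto simp: finite_Ds)
  also have "\<dots> = (\<Sum>u\<in>{x..<y}. AA u)"
    by (rule sum.cong) (auto simp: AA_card card_image inj_on_def)
  finally show ?thesis using e by simp
qed

lemma WW_diff: "x \<le> y \<Longrightarrow> WW y - WW x = int m * int (card {p\<in>CC. x \<le> fst p \<and> fst p < y}) - (y - x)"
  using W_diffA[of x y m AA] starts_card by simp

lemma WW_block:
  assumes "x \<le> y" "\<forall>p\<in>CC. x \<le> fst p \<longrightarrow> fst p < y \<longrightarrow> snd p \<le> y"
  shows "WW y - WW x = - int (pieces CC x y)"
proof -
  have "{p\<in>CC. x \<le> fst p \<and> fst p < y} = within CC x y"
    using assms(2) lamD2[OF lamC] by (force simp: mem_within)
  then have "WW y - WW x = int m * int (card (within CC x y)) - (y - x)"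
    using WW_diff[OF assms(1)] by simp
  also have "\<dots> = - int (pieces CC x y)"
    by (rule decomp[OF lamC assms(1)]) (use S_chord mem_within in blast)
  finally show ?thesis .
qed

lemma WW_inside: assumes "(c,d) \<in> CC" "c < u" "u < d" shows "WW u > WW d"
proof -
  have "\<forall>p\<in>CC. u \<le> fst p \<longrightarrow> fst p < d \<longrightarrow> snd p \<le> d"
  proof (intro ballI impI)
    fix p assume "p \<in> CC" "u \<le> fst p" "fst p < d"
    then show "snd p \<le> d" using nc[OF assms(1), of "fst p" "snd p"] assms(2) by (cases p) force
  qed
  from WW_block[OF _ this] assms(3) have "WW d - WW u = - int (pieces CC u d)" by simp
  moreover have "pieces CC u d \<ge> 1" using pieces_pos[OF lamC assms(3)] .
  ultimately show ?thesis by simp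
qed

lemma WW_chord: assumes "(c,d) \<in> CC"
  shows "WW d = WW c + int m * int (card {d'. (c,d') \<in> CC \<and> d < d'}) - 1"
proof -
  have cd: "c < d" using CC_bounds[OF assms] by simp
  have e: "{p\<in>CC. c \<le> fst p \<and> fst p < d} = within CC c d \<union> Pair c ` {d'. (c,d') \<in> CC \<and> d < d'}"
  proof
    show "{p\<in>CC. c \<le> fst p \<and> fst p < d} \<subseteq> within CC c d \<union> Pair c ` {d'. (c,d') \<in> CC \<and> d < d'}"
    proof
      fix p assume p: "p \<in> {p\<in>CC. c \<le> fst p \<and> fst p < d}"
      obtain a b where ab: "p = (a,b)" by (cases p)
      show "p \<in> within CC c d \<union> Pair c ` {d'. (c,d') \<in> CC \<and> d < d'}"
      proof (cases "a = c")
        case True then show ?thesis using p ab by (cases "b \<le> d") (auto simp: mem_within)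
      next
        case False
        then have "c < a" using p ab by auto
        then have "b \<le> d" using nc[OF assms, of a b] p ab by auto
        then show ?thesis using p ab by (auto simp: mem_within)
      qed
    qed
    show "within CC c d \<union> Pair c ` {d'. (c,d') \<in> CC \<and> d < d'} \<subseteq> {p\<in>CC. c \<le> fst p \<and> fst p < d}"
      using lamD2[OF lamC] cd by (force simp: mem_within)
  qed
  have fin2: "finite (Pair c ` {d'. (c,d') \<in> CC \<and> d < d'})"
    using finite_Ds[of c] by (intro finite_imageI) (auto intro: rev_finite_subset)
  have dj: "within CC c d \<inter> Pair c ` {d'. (c,d') \<in> CC \<and> d < d'} = {}" by (auto simp: mem_within)
  have "card {p\<in>CC. c \<le> fst p \<and> fst p < d} = card (within CC c d) + card {d'. (c,d') \<in> CC \<and> d < d'}"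
    unfolding e using fin2 finite_within[OF lamC] dj by (simp add: card_Un_disjoint card_image inj_on_def)
  then have "WW d - WW c = int m * (int (card (within CC c d)) + int (card {d'. (c,d') \<in> CC \<and> d < d'})) - (d - c)"
    using WW_diff[of c d] cd by simp
  then have "WW d - WW c = (int m * int (card (within CC c d)) - (d - c)) + int m * int (card {d'. (c,d') \<in> CC \<and> d < d'})"
    by (simp add: distrib_left)
  moreover have "int m * int (card (within CC c d)) - (d - c) = -1" using S_chord[OF assms] by simp
  ultimately show ?thesis by linarith
qed

end

context valid
begin

lemma gap_ends: "r \<in> RR \<Longrightarrow> r' \<in> RR \<Longrightarrow> p \<in> CC \<Longrightarrow> fst p < r' \<Longrightarrow> snd p \<le> r'"
  using noray[of "fst p" "snd p" r'] by (cases p) force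

lemma WW_gap:
  assumes "r \<in> RR" "r' \<in> RR" "r < r'" "\<forall>\<rho>\<in>RR. r < \<rho> \<longrightarrow> r' \<le> \<rho>"
  shows "WW r' = WW r - int m"
proof -
  have "WW r' - WW r = - int (pieces CC r r')"
    using assms(3) by (intro WW_block) (use gap_ends[OF assms(1,2)] in auto)
  moreover have "pieces CC r r' = m"
    using assms by (intro gap_cond) force+
  ultimately show ?thesis by simp
qed

lemma WW_gap_inside:
  assumes "r \<in> RR" "r' \<in> RR" "r \<le> u" "u < r'"
  shows "WW u > WW r'"
proof -
  have "WW r' - WW u = - int (pieces CC u r')"
    using assms(4) by (intro WW_block) (use gap_ends[OF assms(1,2)] in auto)
  moreover have "pieces CC u r' \<ge> 1" by (rule pieces_pos[OF lamC assms(4)])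
  ultimately show ?thesis by simp
qed

lemma WW_chain:
  "r \<in> RR \<Longrightarrow> q \<in> RR \<Longrightarrow> r \<le> q \<Longrightarrow> WW q = WW r - int m * int (card {\<rho>\<in>RR. r < \<rho> \<and> \<rho> \<le> q})"
proof (induction "nat (q - r)" arbitrary: r rule: less_induct)
  case less
  show ?case
  proof (cases "r = q")
    case True
    then have "{\<rho>\<in>RR. r < \<rho> \<and> \<rho> \<le> q} = {}" by auto
    then show ?thesis using True by simp
  next
    case False
    then have rq: "r < q" using less.prems by simp
    obtain r' where r': "r' \<in> RR" "r < r'" "\<forall>\<rho>\<in>RR. r < \<rho> \<longrightarrow> r' \<le> \<rho>"
      using next_ray[OF less.prems(1)] by blast
    have r'q: "r' \<le> q" using r'(3) less.prems(2) rq by blast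
    have IH: "WW q = WW r' - int m * int (card {\<rho>\<in>RR. r' < \<rho> \<and> \<rho> \<le> q})"
      using less.hyps[of r'] r' r'q less.prems(2) rq by simp
    have g: "WW r' = WW r - int m" by (rule WW_gap[OF less.prems(1) r'])
    have e: "{\<rho>\<in>RR. r < \<rho> \<and> \<rho> \<le> q} = insert r' {\<rho>\<in>RR. r' < \<rho> \<and> \<rho> \<le> q}"
      using r' r'q by force
    have fin: "finite {\<rho>\<in>RR. r' < \<rho> \<and> \<rho> \<le> q}"
      by (rule finite_subset[of _ "{r'..q}"]) auto
    have "card {\<rho>\<in>RR. r < \<rho> \<and> \<rho> \<le> q} = card {\<rho>\<in>RR. r' < \<rho> \<and> \<rho> \<le> q} + 1"
      unfolding e using fin by simp
    then show ?thesis using IH g by (simp add: algebra_simps)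
  qed
qed

lemma WW_chain_le: "r \<in> RR \<Longrightarrow> q \<in> RR \<Longrightarrow> r \<le> q \<Longrightarrow> WW q \<le> WW r"
  using WW_chain[of r q] by simp

lemma WW_chain_mod: "r \<in> RR \<Longrightarrow> q \<in> RR \<Longrightarrow> WW q mod int m = WW r mod int m"
proof -
  have *: "WW q mod int m = WW r mod int m" if "r \<in> RR" "q \<in> RR" "r \<le> q" for r q
    using WW_chain[OF that] by (simp add: mod_diff_right_eq[symmetric])
  assume "r \<in> RR" "q \<in> RR"
  then show ?thesis using *[of r q] *[of q r] by (cases "r \<le> q") auto
qed

lemma ray_record: assumes "r \<in> RR" "u < r" shows "WW u > WW r"
proof -
  obtain r1 where r1: "r1 \<in> RR" "r1 \<le> u" "\<forall>\<rho>\<in>RR. \<rho> \<le> u \<longrightarrow> \<rho> \<le> r1"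
    using prev_ray[of u] by blast
  obtain r1' where r1': "r1' \<in> RR" "r1 < r1'" "\<forall>\<rho>\<in>RR. r1 < \<rho> \<longrightarrow> r1' \<le> \<rho>"
    using next_ray[OF r1(1)] by blast
  have "u < r1'" using r1(3) r1'(1,2) by force
  then have "WW u > WW r1'" using WW_gap_inside[OF r1(1) r1'(1) r1(2)] by simp
  moreover have "r1' \<le> r" using r1'(3) assms r1(2) by force
  then have "WW r \<le> WW r1'" using WW_chain_le[OF r1'(1) assms(1)] by simp
  ultimately show ?thesis by simp
qed

lemma record_ray:
  assumes rec: "\<forall>u<q. WW u > WW q" and r0: "r0 \<in> RR" and cl: "WW q mod int m = WW r0 mod int m"
  shows "q \<in> RR"
proof -
  obtain r where r: "r \<in> RR" "r \<le> q" "\<forall>\<rho>\<in>RR. \<rho> \<le> q \<longrightarrow> \<rho> \<le> r"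
    using prev_ray[of q] by blast
  obtain r' where r': "r' \<in> RR" "r < r'" "\<forall>\<rho>\<in>RR. r < \<rho> \<longrightarrow> r' \<le> \<rho>"
    using next_ray[OF r(1)] by blast
  show ?thesis
  proof (cases "r = q")
    case True then show ?thesis using r by simp
  next
    case False
    then have rq: "r < q" using r by simp
    have "q < r'" using r(3) r'(1,2) by force
    then have a: "WW q > WW r'" using WW_gap_inside[OF r(1) r'(1) r(2)] by simp
    have b: "WW r' = WW r - int m" by (rule WW_gap[OF r(1) r'])
    have c: "WW q < WW r" using rec rq by simp
    have "WW r mod int m = WW q mod int m" using cl WW_chain_mod[OF r0 r(1)] by simp
    then have "int m dvd (WW r - WW q)" by (simp add: mod_eq_dvd_iff)
    then have "int m \<le> WW r - WW q" using c by (intro zdvd_imp_le) auto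
    then show ?thesis using a b by simp
  qed
qed

lemma CC_sub: "CC \<subseteq> Chords m AA"
proof
  fix p assume p: "p \<in> CC"
  obtain c d where cd: "p = (c,d)" by (cases p)
  have cdl: "c < d" using CC_bounds p cd by force
  define L where "L = {d'. (c,d') \<in> CC \<and> d < d'}"
  have sub: "insert d L \<subseteq> {d'. (c,d') \<in> CC}" using p cd unfolding L_def by auto
  have dL: "d \<notin> L" unfolding L_def by simp
  have finL: "finite L" unfolding L_def using finite_Ds[of c] by (rule rev_finite_subset) auto
  have "card (insert d L) \<le> card {d'. (c,d') \<in> CC}" by (rule card_mono[OF finite_Ds sub])
  then have le: "card L + 1 \<le> AA c" using dL finL by (simp add: AA_card)
  have ww: "WW d = WW c + int m * (int (card L + 1) - 1) - 1"
    using WW_chord[of c d] p cd unfolding L_def by simp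
  have ins: "\<forall>u. c < u \<and> u < d \<longrightarrow> WW u > WW d" using WW_inside[of c d] p cd by blast
  have ex: "\<exists>k::nat. 1 \<le> k \<and> k \<le> AA c \<and> WW d = WW c + int m * (int k - 1) - 1"
    using le ww by (intro exI[of _ "card L + 1"]) simp
  show "p \<in> Chords m AA" unfolding Chords_def cd using cdl ins ex by simp
qed

lemma Chords_sub: "Chords m AA \<subseteq> CC"
proof
  fix p assume p: "p \<in> Chords m AA"
  obtain c d where cd: "p = (c,d)" by (cases p)
  obtain k :: nat where k: "1 \<le> k" "k \<le> AA c" "WW d = WW c + int m * (int k - 1) - 1"
    and cdl: "c < d" and ins: "\<forall>u. c < u \<and> u < d \<longrightarrow> WW u > WW d"
    using p cd unfolding Chords_def by blast
  define Ds where "Ds = {d'. (c,d') \<in> CC}"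
  define f where "f d' = card {d''. (c,d'') \<in> CC \<and> d' < d''} + 1" for d'
  have finD: "finite Ds" unfolding Ds_def by (rule finite_Ds)
  have cardD: "card Ds = AA c" unfolding Ds_def by (simp add: AA_card)
  have finL: "finite {d''. (c,d'') \<in> CC \<and> d' < d''}" for d'
    using finite_Ds[of c] by (rule rev_finite_subset) auto
  have fless: "f d2 < f d1" if "d1 \<in> Ds" "d2 \<in> Ds" "d1 < d2" for d1 d2
  proof -
    have "{d''. (c,d'') \<in> CC \<and> d2 < d''} \<subset> {d''. (c,d'') \<in> CC \<and> d1 < d''}"
      using that unfolding Ds_def by auto
    then show ?thesis unfolding f_def using psubset_card_mono[OF finL] by simp
  qed
  have inj: "inj_on f Ds"
  proof (rule inj_onI)
    fix x y assume "x \<in> Ds" "y \<in> Ds" "f x = f y"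
    then show "x = y" using fless[of x y] fless[of y x] by (cases "x < y"; cases "y < x") auto
  qed
  have img: "f ` Ds \<subseteq> {1..AA c}"
  proof
    fix z assume "z \<in> f ` Ds"
    then obtain d' where d': "d' \<in> Ds" "z = f d'" by blast
    have "insert d' {d''. (c,d'') \<in> CC \<and> d' < d''} \<subseteq> Ds" using d'(1) unfolding Ds_def by auto
    then have "card (insert d' {d''. (c,d'') \<in> CC \<and> d' < d''}) \<le> card Ds" by (rule card_mono[OF finD])
    then have "f d' \<le> AA c" unfolding f_def cardD using finL by simp
    then show "z \<in> {1..AA c}" using d' unfolding f_def by simp
  qed
  have "f ` Ds = {1..AA c}"
    using img card_image[OF inj] cardD by (intro card_subset_eq) auto
  then obtain d' where d': "d' \<in> Ds" "f d' = k" using k by (metis atLeastAtMost_iff imageE)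
  have d'C: "(c,d') \<in> CC" using d' unfolding Ds_def by simp
  have "WW d' = WW c + int m * int (card {d''. (c,d'') \<in> CC \<and> d' < d''}) - 1"
    by (rule WW_chord[OF d'C])
  then have wd: "WW d' = WW d" using k d'(2) unfolding f_def by simp
  have "d' = d"
  proof (rule ccontr)
    assume "d' \<noteq> d"
    then consider "d' < d" | "d < d'" by linarith
    then show False
    proof cases
      case 1
      have "c < d'" using CC_bounds[OF d'C] by simp
      then show False using ins 1 wd by force
    next
      case 2
      then show False using WW_inside[OF d'C cdl 2] wd by simp
    qed
  qed
  then show "p \<in> CC" using d'C cd by simp
qed

lemma CC_eq: "CC = Chords m AA"
  using CC_sub Chords_sub by blast

lemma least_spoke: "Spoke (LEAST i. Spoke i \<in> T) \<in> T" "int (LEAST i. Spoke i \<in> T) \<in> RR"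
proof -
  obtain r where "r \<in> RR" using RR_ne by blast
  then have "Spoke (nat (r mod int n)) \<in> T" by (simp add: RR_iff)
  then show 1: "Spoke (LEAST i. Spoke i \<in> T) \<in> T" by (rule LeastI)
  then have "(LEAST i. Spoke i \<in> T) < n" using Tarcs arcs_Spoke by blast
  then show "int (LEAST i. Spoke i \<in> T) \<in> RR" using 1 by (simp add: RR_iff)
qed

lemma RR_eq: "RR = Rays m AA (jof m n T)"
proof
  show "RR \<subseteq> Rays m AA (jof m n T)"
    using ray_record WW_chain_mod[OF least_spoke(2)] unfolding Rays_def jof_def by auto
  show "Rays m AA (jof m n T) \<subseteq> RR"
    using record_ray[OF _ least_spoke(2)] unfolding Rays_def jof_def by auto
qed

lemma spokes_window: "card (RR \<inter> {a..<a + int n}) = num_spokes T"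
proof -
  have "card (RR \<inter> {a..<a + int n}) = card (RR \<inter> {0..<int n})"
    by (rule card_window[OF npos]) (simp add: RR_iff)
  also have "RR \<inter> {0..<int n} = int ` {i. Spoke i \<in> T}"
  proof
    show "RR \<inter> {0..<int n} \<subseteq> int ` {i. Spoke i \<in> T}"
    proof
      fix r assume "r \<in> RR \<inter> {0..<int n}"
      then have "Spoke (nat r) \<in> T" "r = int (nat r)" by (auto simp: RR_iff)
      then show "r \<in> int ` {i. Spoke i \<in> T}" by blast
    qed
    show "int ` {i. Spoke i \<in> T} \<subseteq> RR \<inter> {0..<int n}"
    proof
      fix r assume "r \<in> int ` {i. Spoke i \<in> T}"
      then obtain i where i: "Spoke i \<in> T" "r = int i" by blast
      then have "i < n" using Tarcs arcs_Spoke by blast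
      then show "r \<in> RR \<inter> {0..<int n}" using i by (simp add: RR_iff)
    qed
  qed
  also have "card (int ` {i. Spoke i \<in> T}) = num_spokes T"
    unfolding num_spokes_def by (simp add: card_image)
  finally show ?thesis .
qed

lemma sum_AA: "int m * (\<Sum>u\<in>{0..<int n}. int (AA u)) = int n - int m * int (num_spokes T)"
proof -
  obtain r where r: "r \<in> RR" using RR_ne by blast
  have rn: "r + int n \<in> RR" using RR_shift[OF r, of 1] by simp
  have "WW (r + int n) = WW r - int m * int (card {\<rho>\<in>RR. r < \<rho> \<and> \<rho> \<le> r + int n})"
    using WW_chain[OF r rn] by simp
  moreover have "{\<rho>\<in>RR. r < \<rho> \<and> \<rho> \<le> r + int n} = RR \<inter> {r+1..<(r+1) + int n}" by auto
  ultimately have a: "WW (r + int n) = WW r - int m * int (num_spokes T)" using spokes_window by simp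
  have "WW (r + int n) - WW r = int m * (\<Sum>u\<in>{r..<r + int n}. int (AA u)) - int n"
    using W_diffA[of r "r + int n" m AA] by simp
  moreover have "(\<Sum>u\<in>{r..<r + int n}. int (AA u)) = (\<Sum>u\<in>{0..<int n}. int (AA u))"
    by (rule sum_window[OF npos]) (simp only: Aof_def mod_mod_trivial)
  ultimately have "WW (r + int n) - WW r = int m * (\<Sum>u\<in>{0..<int n}. int (AA u)) - int n" by simp
  then show ?thesis using a by linarith
qed

end

lemma starts_card_gen:
  fixes C :: "(int \<times> int) set" and x y :: int
  assumes fin: "\<And>u. finite {d. (u,d) \<in> C}"
  shows "card {p\<in>C. x \<le> fst p \<and> fst p < y} = (\<Sum>u\<in>{x..<y}. card {d. (u,d) \<in> C})"
proof -
  have e: "{p\<in>C. x \<le> fst p \<and> fst p < y} = (\<Union>u\<in>{x..<y}. Pair u ` {d. (u,d) \<in> C})"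
    by force
  have "card (\<Union>u\<in>{x..<y}. Pair u ` {d. (u,d) \<in> C}) = (\<Sum>u\<in>{x..<y}. card (Pair u ` {d. (u,d) \<in> C}))"
    by (rule card_UN_disjoint) (auto simp: fin)
  also have "\<dots> = (\<Sum>u\<in>{x..<y}. card {d. (u,d) \<in> C})"
    by (rule sum.cong) (auto simp: card_image inj_on_def)
  finally show ?thesis using e by simp
qed

lemma bij_betw_filter:
  assumes "bij_betw g X Y"
  shows "bij_betw g {x\<in>X. P (g x)} {y\<in>Y. P y}"
  using assms unfolding bij_betw_def inj_on_def by auto

definition build :: "nat \<Rightarrow> nat \<Rightarrow> int \<Rightarrow> (int \<Rightarrow> nat) \<Rightarrow> parc set" where
  "build m n j A = {Spoke i | i. i < n \<and> int i \<in> Rays m A j}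
     \<union> {Chord i k | i k. i < n \<and> 2 \<le> k \<and> k \<le> n \<and> (int i, int i + int k) \<in> Chords m A}"

lemma build_Spoke: "Spoke i \<in> build m n j A \<longleftrightarrow> i < n \<and> int i \<in> Rays m A j"
  unfolding build_def by auto

lemma build_Chord: "Chord i k \<in> build m n j A \<longleftrightarrow> i < n \<and> 2 \<le> k \<and> k \<le> n \<and> (int i, int i + int k) \<in> Chords m A"
  unfolding build_def by auto

locale constr =
  fixes m n s K :: nat and A :: "int \<Rightarrow> nat" and j :: int
  assumes m1: "m \<ge> 1" and s1: "s \<ge> 1" and nK: "n = m * (K + s)"
    and Aper: "\<And>u. A u = A (u mod int n)"
    and Asum: "(\<Sum>u\<in>{0..<int n}. A u) = K"
    and j0: "0 \<le> j" and jm: "j < int m"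
begin

abbreviation "V \<equiv> W m A"

lemma npos: "n > 0" using m1 s1 nK by simp

lemma ms_pos: "int m * int s \<ge> 1"
proof -
  have "m * s \<ge> 1" using m1 s1 by (simp add: Suc_le_eq)
  then show ?thesis by (metis of_nat_mult of_nat_1 of_nat_le_iff)
qed

lemma V_shift: "V (t + int n) = V t - int m * int s"
proof -
  have "V (t + int n) - V t = int m * (\<Sum>u\<in>{t..<t + int n}. int (A u)) - int n"
    using W_diffA[of t "t + int n" m A] by simp
  also have "(\<Sum>u\<in>{t..<t + int n}. int (A u)) = (\<Sum>u\<in>{0..<int n}. int (A u))"
    by (rule sum_window[OF npos]) (use Aper in simp)
  also have "\<dots> = int K" using Asum by (metis of_nat_sum)
  finally show ?thesis using nK by (simp add: algebra_simps)
qed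

lemma V_shift_nat: "V (t + int k * int n) = V t - int k * int m * int s"
proof (induction k)
  case 0 then show ?case by simp
next
  case (Suc k)
  have "V (t + int (Suc k) * int n) = V ((t + int k * int n) + int n)" by (simp add: algebra_simps)
  also have "\<dots> = V (t + int k * int n) - int m * int s" by (rule V_shift)
  finally show ?case using Suc by (simp add: algebra_simps)
qed

lemma V_shift_int: "V (t + k * int n) = V t - k * int m * int s"
proof (cases "k \<ge> 0")
  case True
  then show ?thesis using V_shift_nat[of t "nat k"] by simp
next
  case False
  have "V t = V ((t + k * int n) + int (nat (-k)) * int n)" using False by simp
  also have "\<dots> = V (t + k * int n) - int (nat (-k)) * int m * int s" by (rule V_shift_nat)
  finally show ?thesis using False by simp
qed

lemma A_shift: "A (t + k * int n) = A t"
  using Aper[of "t + k * int n"] Aper[of t] by simp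

lemma V_step: "V (t + 1) = V t + int m * int (A t) - 1"
  by (simp add: W_succ stp_def)

lemma hit:
  assumes "V x \<ge> L"
  shows "\<exists>t\<ge>x. V t = L \<and> (\<forall>u. x \<le> u \<and> u < t \<longrightarrow> V u > L)"
proof -
  define K0 where "K0 = {k::nat. V (x + int k) \<le> L}"
  define k1 where "k1 = nat (V x - L) * n"
  have "V (x + int (nat (V x - L)) * int n) = V x - int (nat (V x - L)) * int m * int s"
    by (rule V_shift_nat)
  moreover have "int (nat (V x - L)) * int m * int s \<ge> int (nat (V x - L))"
    using ms_pos mult_left_mono[of 1 "int m * int s" "int (nat (V x - L))"] by (simp add: mult.assoc)
  ultimately have "k1 \<in> K0" using assms unfolding K0_def k1_def by simp
  then have kin: "(LEAST k. k \<in> K0) \<in> K0" by (rule LeastI)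
  define k0 where "k0 = (LEAST k. k \<in> K0)"
  have kmin: "k \<in> K0 \<Longrightarrow> k0 \<le> k" for k unfolding k0_def by (rule Least_le)
  have le: "V (x + int k0) \<le> L" using kin unfolding k0_def K0_def by simp
  have above: "V u > L" if "x \<le> u" "u < x + int k0" for u
  proof -
    have "nat (u - x) \<notin> K0" using kmin[of "nat (u - x)"] that by linarith
    then show ?thesis using that unfolding K0_def by simp
  qed
  have "V (x + int k0) = L"
  proof (cases "k0 = 0")
    case True then show ?thesis using le assms by simp
  next
    case False
    then have "V (x + int k0 - 1) > L" using above[of "x + int k0 - 1"] by simp
    moreover have "V (x + int k0 - 1 + 1) \<ge> V (x + int k0 - 1) - 1" by (rule W_step_ge)
    ultimately show ?thesis using le by simp
  qed
  then show ?thesis using above by (intro exI[of _ "x + int k0"]) auto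
qed

definition Rec :: "int set" where "Rec = {r. \<forall>u<r. V u > V r}"

lemma rec_unique: "q1 \<in> Rec \<Longrightarrow> q2 \<in> Rec \<Longrightarrow> V q1 = V q2 \<Longrightarrow> q1 = q2"
proof (rule ccontr)
  assume h: "q1 \<in> Rec" "q2 \<in> Rec" "V q1 = V q2" "q1 \<noteq> q2"
  then consider "q1 < q2" | "q2 < q1" by linarith
  then show False
  proof cases
    case 1 then show False using h unfolding Rec_def by fastforce
  next
    case 2 then show False using h unfolding Rec_def by fastforce
  qed
qed

lemma V_lower: "V u \<ge> Min (V ` {0..<int n}) - (u div int n) * int m * int s"
proof -
  have "u = u mod int n + (u div int n) * int n" by simp
  then have "V u = V (u mod int n) - (u div int n) * int m * int s"
    using V_shift_int[of "u mod int n" "u div int n"] by simp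
  moreover have "V (u mod int n) \<ge> Min (V ` {0..<int n})"
    using npos by (intro Min_le) auto
  ultimately show ?thesis by simp
qed

lemma rec_exists: "\<exists>t\<in>Rec. V t = L"
proof -
  define M0 where "M0 = Min (V ` {0..<int n})"
  define k where "k = nat (L - M0) + 1"
  define x where "x = - int k * int n"
  have k1: "int k \<ge> 1" "int k > L - M0" unfolding k_def by auto
  have low: "V u > L" if "u < x" for u
  proof -
    have "u div int n < - int k"
    proof (rule ccontr)
      assume "\<not> u div int n < - int k"
      then have "u div int n * int n \<ge> - int k * int n" using npos by (intro mult_right_mono) auto
      moreover have "u \<ge> u div int n * int n"
        using pos_mod_sign[of "int n" u] minus_mod_eq_div_mult[of u "int n"] npos by linarith
      ultimately show False using that unfolding x_def by linarith
    qed
    then have "- (u div int n) \<ge> int k + 1" by simp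
    then have "- (u div int n) * (int m * int s) \<ge> (int k + 1) * 1"
      using ms_pos by (intro mult_mono) auto
    moreover have "V u \<ge> M0 - (u div int n) * int m * int s" using V_lower unfolding M0_def .
    ultimately show ?thesis using k1 by (simp add: algebra_simps)
  qed
  have h1: "V x = V 0 + int k * (int m * int s)" unfolding x_def using V_shift_int[of 0 "- int k"] by (simp add: algebra_simps)
  have h2: "V 0 \<ge> M0" unfolding M0_def using npos by (intro Min_le) auto
  have h3: "int k * (int m * int s) \<ge> int k * 1" using ms_pos by (intro mult_left_mono) auto
  have "V x \<ge> L" using h1 h2 h3 k1 by linarith
  from hit[OF this] obtain t where t: "t \<ge> x" "V t = L" "\<forall>u. x \<le> u \<and> u < t \<longrightarrow> V u > L" by blast
  have "V u > V t" if "u < t" for u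
  proof (cases "u < x")
    case True then show ?thesis using low t(2) by simp
  next
    case False then show ?thesis using t(2,3) that by simp
  qed
  then have "t \<in> Rec" unfolding Rec_def by blast
  then show ?thesis using t by blast
qed

abbreviation "RA \<equiv> Rays m A j"

lemma RA_Rec: "r \<in> RA \<longleftrightarrow> r \<in> Rec \<and> V r mod int m = j"
  unfolding Rays_def Rec_def by simp

lemma Rec_shift1: "r \<in> Rec \<Longrightarrow> r + k * int n \<in> Rec"
proof -
  assume r: "r \<in> Rec"
  have "V u > V (r + k * int n)" if "u < r + k * int n" for u
  proof -
    have "V (u - k * int n) > V r" using r that unfolding Rec_def by simp
    moreover have "V (u - k * int n + k * int n) = V (u - k * int n) - k * int m * int s" by (rule V_shift_int)
    moreover have "V (r + k * int n) = V r - k * int m * int s" by (rule V_shift_int)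
    ultimately show ?thesis by simp
  qed
  then show ?thesis unfolding Rec_def by blast
qed

lemma RA_shift1: "r \<in> RA \<Longrightarrow> r + k * int n \<in> RA"
proof -
  assume r: "r \<in> RA"
  have "V (r + k * int n) = V r + (- (k * int s)) * int m"
    using V_shift_int[of r k] by (simp add: algebra_simps)
  then have "V (r + k * int n) mod int m = V r mod int m" by (simp only: mod_mult_self1)
  then show ?thesis using r Rec_shift1 unfolding RA_Rec by simp
qed

lemma RA_mod: "r \<in> RA \<longleftrightarrow> r mod int n \<in> RA"
proof
  assume "r \<in> RA"
  from RA_shift1[OF this, of "- (r div int n)"] show "r mod int n \<in> RA"
    by (simp add: minus_div_mult_eq_mod[symmetric] algebra_simps)
next
  assume "r mod int n \<in> RA"
  from RA_shift1[OF this, of "r div int n"] show "r \<in> RA" by simp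
qed

lemma block_one:
  "{L. b < L \<and> L \<le> b + int m \<and> L mod int m = j} = {b + 1 + (j - b - 1) mod int m}"
proof
  have mpos: "int m > 0" using m1 by simp
  show "{L. b < L \<and> L \<le> b + int m \<and> L mod int m = j} \<subseteq> {b + 1 + (j - b - 1) mod int m}"
  proof
    fix L assume L: "L \<in> {L. b < L \<and> L \<le> b + int m \<and> L mod int m = j}"
    have "(L - b - 1) mod int m = L - b - 1" using L mpos by (intro mod_pos_pos_trivial) auto
    moreover have "(L - b - 1) mod int m = (j - b - 1) mod int m"
    proof -
      have "(L - (b + 1)) mod int m = (L mod int m - (b + 1)) mod int m" by (simp add: mod_diff_left_eq)
      then show ?thesis using L by (simp add: algebra_simps)
    qed
    ultimately show "L \<in> {b + 1 + (j - b - 1) mod int m}" by simp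
  qed
  show "{b + 1 + (j - b - 1) mod int m} \<subseteq> {L. b < L \<and> L \<le> b + int m \<and> L mod int m = j}"
  proof -
    have "(b + 1 + (j - b - 1) mod int m) mod int m = (b + 1 + (j - b - 1)) mod int m"
      by (simp add: mod_add_right_eq)
    also have "\<dots> = j" using j0 jm by simp
    finally have "(b + 1 + (j - b - 1) mod int m) mod int m = j" .
    moreover have "0 \<le> (j - b - 1) mod int m" "(j - b - 1) mod int m < int m" using mpos by auto
    ultimately show ?thesis by auto
  qed
qed

lemma level_count: "card {L. a < L \<and> L \<le> a + int m * int t \<and> L mod int m = j} = t"
proof (induction t)
  case 0
  have "{L. a < L \<and> L \<le> a + int m * int 0 \<and> L mod int m = j} = {}" by auto
  then show ?case by (simp only:) simp
next
  case (Suc t)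
  define b where "b = a + int m * int t"
  have e: "{L. a < L \<and> L \<le> a + int m * int (Suc t) \<and> L mod int m = j}
      = {L. a < L \<and> L \<le> a + int m * int t \<and> L mod int m = j} \<union> {L. b < L \<and> L \<le> b + int m \<and> L mod int m = j}"
  proof (rule set_eqI)
    fix x
    have mt: "0 \<le> int m * int t" by simp
    have eq: "int m * int (Suc t) = int m * int t + int m" by (simp add: algebra_simps)
    show "x \<in> {L. a < L \<and> L \<le> a + int m * int (Suc t) \<and> L mod int m = j} \<longleftrightarrow>
      x \<in> {L. a < L \<and> L \<le> a + int m * int t \<and> L mod int m = j} \<union> {L. b < L \<and> L \<le> b + int m \<and> L mod int m = j}"
    proof -
      define c where "c = int m * int t"
      have c0: "0 \<le> c" unfolding c_def by simp
      show ?thesis unfolding b_def mem_Collect_eq Un_iff eq c_def[symmetric] using c0 by auto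
    qed
  qed
  have fin: "finite {L. a < L \<and> L \<le> a + int m * int t \<and> L mod int m = j}"
    by (rule finite_subset[of _ "{a..a + int m * int t}"]) auto
  have dj: "{L. a < L \<and> L \<le> a + int m * int t \<and> L mod int m = j} \<inter> {L. b < L \<and> L \<le> b + int m \<and> L mod int m = j} = {}"
    unfolding b_def by auto
  show ?case unfolding e using card_Un_disjoint[OF fin _ dj] Suc block_one[of b] by simp
qed

lemma RA_window: assumes r0: "r0 \<in> RA" shows "card (RA \<inter> {r0..<r0 + int n}) = s"
proof -
  define Ls where "Ls = {L. V r0 - int m * int s < L \<and> L \<le> V r0 - int m * int s + int m * int s \<and> L mod int m = j}"
  have r0R: "r0 \<in> Rec" using r0 RA_Rec by blast
  have r0n: "r0 + int n \<in> Rec" using Rec_shift1[OF r0R, of 1] by simp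
  have Vn: "V (r0 + int n) = V r0 - int m * int s" by (rule V_shift)
  have "bij_betw V (RA \<inter> {r0..<r0 + int n}) Ls"
  proof (rule bij_betw_imageI)
    show "inj_on V (RA \<inter> {r0..<r0 + int n})"
      using rec_unique RA_Rec by (intro inj_onI) blast
    show "V ` (RA \<inter> {r0..<r0 + int n}) = Ls"
    proof
      show "V ` (RA \<inter> {r0..<r0 + int n}) \<subseteq> Ls"
      proof
        fix L assume "L \<in> V ` (RA \<inter> {r0..<r0 + int n})"
        then obtain q where q: "q \<in> RA" "r0 \<le> q" "q < r0 + int n" "L = V q" by auto
        have qR: "q \<in> Rec" "V q mod int m = j" using q(1) RA_Rec by auto
        have "V q \<le> V r0"
        proof (cases "q = r0")
          case False then have "r0 < q" using q by simp
          then show ?thesis using qR unfolding Rec_def by force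
        qed simp
        moreover have "V q > V (r0 + int n)" using r0n q(3) unfolding Rec_def by blast
        ultimately show "L \<in> Ls" unfolding Ls_def using q(4) qR(2) Vn by simp
      qed
      show "Ls \<subseteq> V ` (RA \<inter> {r0..<r0 + int n})"
      proof
        fix L assume L: "L \<in> Ls"
        obtain q where q: "q \<in> Rec" "V q = L" using rec_exists by blast
        have "r0 \<le> q"
        proof (rule ccontr)
          assume "\<not> r0 \<le> q"
          then have "V q > V r0" using r0R unfolding Rec_def by simp
          then show False using L q unfolding Ls_def by simp
        qed
        moreover have "q < r0 + int n"
        proof (rule ccontr)
          assume "\<not> q < r0 + int n"
          have "V q \<le> V (r0 + int n)"
          proof (cases "q = r0 + int n")
            case False
            then have "r0 + int n < q" using \<open>\<not> q < r0 + int n\<close> by simp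
            then show ?thesis using q(1) unfolding Rec_def by force
          qed simp
          then show False using L q Vn unfolding Ls_def by simp
        qed
        moreover have "q \<in> RA" using q L RA_Rec unfolding Ls_def by simp
        ultimately show "L \<in> V ` (RA \<inter> {r0..<r0 + int n})" using q by force
      qed
    qed
  qed
  then have "card (RA \<inter> {r0..<r0 + int n}) = card Ls" by (rule bij_betw_same_card)
  also have "card Ls = s" unfolding Ls_def by (rule level_count)
  finally show ?thesis .
qed

lemma RA_ne: "\<exists>r. r \<in> RA"
proof -
  obtain q where "q \<in> Rec" "V q = j" using rec_exists by blast
  then have "q \<in> RA" using RA_Rec j0 jm by simp
  then show ?thesis by blast
qed

lemma RA_count: "card (RA \<inter> {0..<int n}) = s"
proof -
  obtain r0 where r0: "r0 \<in> RA" using RA_ne by blast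
  have "card (RA \<inter> {r0..<r0 + int n}) = card (RA \<inter> {0..<int n})"
    by (rule card_window[OF npos]) (rule RA_mod)
  then show ?thesis using RA_window[OF r0] by simp
qed

abbreviation "CH \<equiv> Chords m A"

lemma CH_mem: "(c,d) \<in> CH \<longleftrightarrow> c < d \<and> (\<exists>k::nat. 1 \<le> k \<and> k \<le> A c \<and> V d = V c + int m * (int k - 1) - 1)
      \<and> (\<forall>u. c < u \<and> u < d \<longrightarrow> V u > V d)"
  by (simp add: Chords_def)

lemma CH_shift: assumes "(c,d) \<in> CH" shows "(c + k * int n, d + k * int n) \<in> CH"
proof -
  obtain kk :: nat where kk: "1 \<le> kk" "kk \<le> A c" "V d = V c + int m * (int kk - 1) - 1"
    and cd: "c < d" and ins: "\<forall>u. c < u \<and> u < d \<longrightarrow> V u > V d"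
    using assms unfolding CH_mem by blast
  have Vd: "V (d + k * int n) = V d - k * int m * int s" by (rule V_shift_int)
  have Vc: "V (c + k * int n) = V c - k * int m * int s" by (rule V_shift_int)
  have "V u > V (d + k * int n)" if "c + k * int n < u" "u < d + k * int n" for u
  proof -
    have "V (u - k * int n) > V d" using ins that by simp
    moreover have "V (u - k * int n + k * int n) = V (u - k * int n) - k * int m * int s" by (rule V_shift_int)
    ultimately show ?thesis using Vd by simp
  qed
  moreover have "A (c + k * int n) = A c" by (rule A_shift)
  ultimately show ?thesis unfolding CH_mem using kk cd Vd Vc by auto
qed

lemma CH_bounds: assumes "(c,d) \<in> CH" shows "c + 2 \<le> d \<and> d \<le> c + int n"
proof -
  obtain kk :: nat where kk: "1 \<le> kk" "kk \<le> A c" "V d = V c + int m * (int kk - 1) - 1"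
    and cd: "c < d" and ins: "\<forall>u. c < u \<and> u < d \<longrightarrow> V u > V d"
    using assms unfolding CH_mem by blast
  have mk: "int m * int kk \<le> int m * int (A c)" using kk(2) by (intro mult_left_mono) auto
  have "int m * (int kk - 1) = int m * int kk - int m" by (simp add: algebra_simps)
  then have Vd: "V d = V c + int m * int kk - int m - 1" using kk(3) by simp
  have "d \<noteq> c + 1"
  proof
    assume "d = c + 1"
    then have "V d = V c + int m * int (A c) - 1" using V_step[of c] by simp
    then show False using Vd mk m1 by simp
  qed
  moreover have "d \<le> c + int n"
  proof (rule ccontr)
    assume "\<not> d \<le> c + int n"
    then have "V (c + int n) > V d" using ins npos by simp
    moreover have "V (c + int n) = V c - int m * int s" by (rule V_shift)
    moreover have "int m * int kk \<ge> int m" using kk(1) m1 mult_left_mono[of 1 "int kk" "int m"] by simp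
    ultimately show False using Vd ms_pos by simp
  qed
  ultimately show ?thesis using cd by simp
qed

lemma CH_first: assumes "(c,d1) \<in> CH" "(c,d2) \<in> CH" "V d1 = V d2" shows "d1 = d2"
proof (rule ccontr)
  assume "d1 \<noteq> d2"
  then consider "d1 < d2" | "d2 < d1" by linarith
  then show False
  proof cases
    case 1
    have "c < d1" using CH_bounds[OF assms(1)] by simp
    then show False using assms(2,3) 1 unfolding CH_mem by force
  next
    case 2
    have "c < d2" using CH_bounds[OF assms(2)] by simp
    then show False using assms(1,3) 2 unfolding CH_mem by force
  qed
qed

lemma CH_exists: assumes "1 \<le> k" "k \<le> A c"
  shows "\<exists>d. (c,d) \<in> CH \<and> V d = V c + int m * (int k - 1) - 1"
proof -
  define L where "L = V c + int m * (int k - 1) - 1"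
  have mk: "int m * int k \<le> int m * int (A c)" using assms(2) by (intro mult_left_mono) auto
  have "int m * (int k - 1) = int m * int k - int m" by (simp add: algebra_simps)
  then have L: "L = V c + int m * int k - int m - 1" unfolding L_def by simp
  have V1: "V (c + 1) = V c + int m * int (A c) - 1" by (rule V_step)
  have m1': "int m \<ge> 1" using m1 by simp
  have "V (c + 1) > L" using L mk m1' V1 by linarith
  then obtain t where t: "t \<ge> c + 1" "V t = L" "\<forall>u. c + 1 \<le> u \<and> u < t \<longrightarrow> V u > L"
    using hit[of L "c + 1"] by auto
  have "t \<noteq> c + 1" using t(2) \<open>V (c + 1) > L\<close> by auto
  then have "c < t" using t(1) by simp
  moreover have "\<forall>u. c < u \<and> u < t \<longrightarrow> V u > V t" using t by auto
  ultimately have "(c,t) \<in> CH" unfolding CH_mem using assms t(2) unfolding L_def by blast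
  then show ?thesis using t(2) unfolding L_def by blast
qed

definition lvl :: "int \<Rightarrow> int \<Rightarrow> nat" where
  "lvl c d = nat ((V d - V c + 1) div int m) + 1"

lemma lvl_eq: assumes "V d = V c + int m * (int k - 1) - 1" "1 \<le> k" shows "lvl c d = k"
proof -
  have "V d - V c + 1 = (int k - 1) * int m" using assms by (simp add: algebra_simps)
  then have "(V d - V c + 1) div int m = int k - 1" using m1 by simp
  then show ?thesis unfolding lvl_def using assms(2) by simp
qed

lemma lvl_CH: assumes "(c,d) \<in> CH"
  shows "1 \<le> lvl c d \<and> lvl c d \<le> A c \<and> V d = V c + int m * (int (lvl c d) - 1) - 1"
proof -
  obtain kk :: nat where kk: "1 \<le> kk" "kk \<le> A c" "V d = V c + int m * (int kk - 1) - 1"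
    using assms unfolding CH_mem by blast
  then show ?thesis using lvl_eq[OF kk(3) kk(1)] by simp
qed

lemma lvl_bij: "bij_betw (lvl c) {d. (c,d) \<in> CH} {1..A c}"
proof (rule bij_betw_imageI)
  show "inj_on (lvl c) {d. (c, d) \<in> CH}"
  proof (rule inj_onI)
    fix x y assume "x \<in> {d. (c, d) \<in> CH}" "y \<in> {d. (c, d) \<in> CH}" "lvl c x = lvl c y"
    then show "x = y" using lvl_CH[of c x] lvl_CH[of c y] CH_first[of c x y] by simp
  qed
  show "lvl c ` {d. (c, d) \<in> CH} = {1..A c}"
  proof
    show "lvl c ` {d. (c, d) \<in> CH} \<subseteq> {1..A c}" using lvl_CH by auto
    show "{1..A c} \<subseteq> lvl c ` {d. (c, d) \<in> CH}"
    proof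
      fix k assume "k \<in> {1..A c}"
      then obtain d where "(c,d) \<in> CH" "V d = V c + int m * (int k - 1) - 1" using CH_exists by force
      then show "k \<in> lvl c ` {d. (c, d) \<in> CH}" using lvl_eq \<open>k \<in> {1..A c}\<close> by force
    qed
  qed
qed

lemma CH_card: "card {d. (c,d) \<in> CH} = A c"
  using bij_betw_same_card[OF lvl_bij[of c]] by simp

lemma CH_finite: "finite {d. (c,d) \<in> CH}"
proof -
  have "{d. (c,d) \<in> CH} \<subseteq> {c..c + int n}" using CH_bounds by force
  then show ?thesis by (rule finite_subset) simp
qed

lemma CH_longer: assumes "(c,d) \<in> CH"
  shows "card {d'. (c,d') \<in> CH \<and> d < d'} = lvl c d - 1"
proof -
  have key: "d < d' \<longleftrightarrow> lvl c d' < lvl c d" if d': "(c,d') \<in> CH" for d'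
  proof -
    have V': "V d' = V c + int m * (int (lvl c d') - 1) - 1" using lvl_CH[OF d'] by simp
    have V0: "V d = V c + int m * (int (lvl c d) - 1) - 1" using lvl_CH[OF assms] by simp
    have mono: "V d' < V d \<longleftrightarrow> lvl c d' < lvl c d"
    proof -
      have "V d' < V d \<longleftrightarrow> int m * (int (lvl c d') - 1) < int m * (int (lvl c d) - 1)" using V' V0 by simp
      also have "\<dots> \<longleftrightarrow> int (lvl c d') - 1 < int (lvl c d) - 1" using m1 by (simp add: mult_less_cancel_left)
      finally show ?thesis by simp
    qed
    have cd': "c < d'" using CH_bounds[OF d'] by simp
    have cd: "c < d" using CH_bounds[OF assms] by simp
    show ?thesis
    proof
      assume "d < d'"
      then have "V d > V d'" using cd d' unfolding CH_mem by blast
      then show "lvl c d' < lvl c d" using mono by simp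
    next
      assume "lvl c d' < lvl c d"
      then have lt: "V d' < V d" using mono by simp
      show "d < d'"
      proof (rule ccontr)
        assume "\<not> d < d'"
        then consider "d' = d" | "d' < d" by linarith
        then show False
        proof cases
          case 1 then show False using lt by simp
        next
          case 2 then have "V d' > V d" using cd' assms unfolding CH_mem by blast
          then show False using lt by simp
        qed
      qed
    qed
  qed
  have "{d'. (c,d') \<in> CH \<and> d < d'} = {d'\<in>{d. (c,d) \<in> CH}. lvl c d' < lvl c d}"
    using key by auto
  moreover have "bij_betw (lvl c) {d'\<in>{d. (c,d) \<in> CH}. lvl c d' < lvl c d} {k\<in>{1..A c}. k < lvl c d}"
    by (rule bij_betw_filter[OF lvl_bij])
  moreover have "{k\<in>{1..A c}. k < lvl c d} = {1..<lvl c d}" using lvl_CH[OF assms] by auto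
  ultimately show ?thesis by (simp add: bij_betw_same_card)
qed

lemma CH_nc: assumes "(a,b) \<in> CH" "(c,d) \<in> CH" shows "\<not>(a<c \<and> c<b \<and> b<d)"
proof
  assume h: "a<c \<and> c<b \<and> b<d"
  have "V c > V b" using assms(1) h unfolding CH_mem by blast
  moreover have "V b > V d" using assms(2) h unfolding CH_mem by blast
  moreover have "V d \<ge> V c - 1"
  proof -
    have "V d = V c + int m * (int (lvl c d) - 1) - 1" "1 \<le> lvl c d" using lvl_CH[OF assms(2)] by auto
    moreover have "int m * (int (lvl c d) - 1) \<ge> 0" using calculation(2) by simp
    ultimately show ?thesis by linarith
  qed
  ultimately show False by simp
qed

lemma CH_noray: assumes "(a,b) \<in> CH" "r \<in> Rec" shows "\<not>(a<r \<and> r<b)"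
proof
  assume h: "a<r \<and> r<b"
  have "V a > V r" using assms(2) h unfolding Rec_def by blast
  moreover have "V r > V b" using assms(1) h unfolding CH_mem by blast
  moreover have "V b \<ge> V a - 1"
  proof -
    have "V b = V a + int m * (int (lvl a b) - 1) - 1" "1 \<le> lvl a b" using lvl_CH[OF assms(1)] by auto
    moreover have "int m * (int (lvl a b) - 1) \<ge> 0" using calculation(2) by simp
    ultimately show ?thesis by linarith
  qed
  ultimately show False by simp
qed

lemma lamCH: "lam CH"
  unfolding lam_def using CH_nc CH_bounds by fastforce

lemma CH_diff: "x \<le> y \<Longrightarrow> V y - V x = int m * int (card {p\<in>CH. x \<le> fst p \<and> fst p < y}) - (y - x)"
proof -
  assume xy: "x \<le> y"
  have "card {p\<in>CH. x \<le> fst p \<and> fst p < y} = (\<Sum>u\<in>{x..<y}. card {d. (u,d) \<in> CH})"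
    by (rule starts_card_gen) (rule CH_finite)
  also have "\<dots> = (\<Sum>u\<in>{x..<y}. A u)" by (simp add: CH_card)
  finally have "int (card {p\<in>CH. x \<le> fst p \<and> fst p < y}) = (\<Sum>u\<in>{x..<y}. int (A u))" by simp
  then show ?thesis using W_diffA[OF xy, of m A] by simp
qed

lemma CH_S: assumes "(c,d) \<in> CH" shows "int m * int (card (within CH c d)) - (d - c) = -1"
proof -
  have cd: "c < d" using CH_bounds[OF assms] by simp
  have e: "{p\<in>CH. c \<le> fst p \<and> fst p < d} = within CH c d \<union> Pair c ` {d'. (c,d') \<in> CH \<and> d < d'}"
  proof
    show "{p\<in>CH. c \<le> fst p \<and> fst p < d} \<subseteq> within CH c d \<union> Pair c ` {d'. (c,d') \<in> CH \<and> d < d'}"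
    proof
      fix p assume p: "p \<in> {p\<in>CH. c \<le> fst p \<and> fst p < d}"
      obtain a b where ab: "p = (a,b)" by (cases p)
      show "p \<in> within CH c d \<union> Pair c ` {d'. (c,d') \<in> CH \<and> d < d'}"
      proof (cases "a = c")
        case True then show ?thesis using p ab by (cases "b \<le> d") (auto simp: mem_within)
      next
        case False
        then have "c < a" using p ab by auto
        then have "b \<le> d" using CH_nc[OF assms, of a b] p ab by auto
        then show ?thesis using p ab by (auto simp: mem_within)
      qed
    qed
    show "within CH c d \<union> Pair c ` {d'. (c,d') \<in> CH \<and> d < d'} \<subseteq> {p\<in>CH. c \<le> fst p \<and> fst p < d}"
      using lamD2[OF lamCH] cd by (force simp: mem_within)
  qed
  have fin2: "finite (Pair c ` {d'. (c,d') \<in> CH \<and> d < d'})"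
    using CH_finite[of c] by (intro finite_imageI) (auto intro: rev_finite_subset)
  have dj: "within CH c d \<inter> Pair c ` {d'. (c,d') \<in> CH \<and> d < d'} = {}" by (auto simp: mem_within)
  have "card {p\<in>CH. c \<le> fst p \<and> fst p < d} = card (within CH c d) + card {d'. (c,d') \<in> CH \<and> d < d'}"
    unfolding e using fin2 finite_within[OF lamCH] dj by (simp add: card_Un_disjoint card_image inj_on_def)
  then have "V d - V c = int m * (int (card (within CH c d)) + int (lvl c d - 1)) - (d - c)"
    using CH_diff[of c d] cd CH_longer[OF assms] by simp
  moreover have "V d = V c + int m * (int (lvl c d) - 1) - 1" "1 \<le> lvl c d" using lvl_CH[OF assms] by auto
  ultimately have "int m * (int (card (within CH c d)) + int (lvl c d - 1)) - (d - c) = int m * (int (lvl c d - 1)) - 1"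
    by simp
  then show ?thesis by (simp add: algebra_simps)
qed

abbreviation "TB \<equiv> build m n j A"

lemma TB_arcs: "TB \<subseteq> arcs n"
  unfolding build_def arcs_def by auto

lemma CH_mod: "(a,b) \<in> CH \<longleftrightarrow> a \<le> b \<and> 2 \<le> b - a \<and> b - a \<le> int n \<and> (a mod int n, a mod int n + (b - a)) \<in> CH"
proof
  assume h: "(a,b) \<in> CH"
  have h2: "(a + (- (a div int n)) * int n, b + (- (a div int n)) * int n) \<in> CH" by (rule CH_shift[OF h])
  have e1: "a + (- (a div int n)) * int n = a mod int n" by (simp add: minus_div_mult_eq_mod[symmetric] algebra_simps)
  have e2: "b + (- (a div int n)) * int n = a mod int n + (b - a)" by (simp add: minus_div_mult_eq_mod[symmetric] algebra_simps)
  from h2 have "(a mod int n, a mod int n + (b - a)) \<in> CH" by (simp only: e1 e2)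
  then show "a \<le> b \<and> 2 \<le> b - a \<and> b - a \<le> int n \<and> (a mod int n, a mod int n + (b - a)) \<in> CH"
    using CH_bounds[OF h] by simp
next
  assume h: "a \<le> b \<and> 2 \<le> b - a \<and> b - a \<le> int n \<and> (a mod int n, a mod int n + (b - a)) \<in> CH"
  have "(a mod int n + (a div int n) * int n, a mod int n + (b - a) + (a div int n) * int n) \<in> CH"
    using CH_shift h by blast
  moreover have "a mod int n + (a div int n) * int n = a" by simp
  moreover have "a mod int n + (b - a) + (a div int n) * int n = b" by (simp add: algebra_simps)
  ultimately show "(a,b) \<in> CH" by simp
qed

lemma TB_chords: "lift_chords n TB = CH"
proof (rule set_eqI)
  fix p :: "int \<times> int"
  obtain a b where p: "p = (a,b)" by (cases p)
  have "(a,b) \<in> lift_chords n TB \<longleftrightarrow> a \<le> b \<and> Chord (nat (a mod int n)) (nat (b - a)) \<in> TB"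
    by (rule lift_chords_iff[OF TB_arcs npos])
  also have "\<dots> \<longleftrightarrow> (a,b) \<in> CH"
  proof -
    have "0 \<le> a mod int n" "a mod int n < int n" using npos by auto
    then show ?thesis unfolding build_Chord using CH_mod[of a b] by (auto simp: nat_less_iff le_nat_iff)
  qed
  finally show "p \<in> lift_chords n TB \<longleftrightarrow> p \<in> CH" using p by simp
qed

lemma TB_rays: "lift_rays n TB = RA"
proof (rule set_eqI)
  fix r
  have "r \<in> lift_rays n TB \<longleftrightarrow> Spoke (nat (r mod int n)) \<in> TB"
    by (rule lift_rays_iff[OF TB_arcs npos])
  also have "\<dots> \<longleftrightarrow> r mod int n \<in> RA"
  proof -
    have "0 \<le> r mod int n" "r mod int n < int n" using npos by auto
    then show ?thesis unfolding build_Spoke by (auto simp: nat_less_iff)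
  qed
  also have "\<dots> \<longleftrightarrow> r \<in> RA" using RA_mod by simp
  finally show "r \<in> lift_rays n TB \<longleftrightarrow> r \<in> RA" .
qed

lemma RA_gap:
  assumes "r \<in> RA" "r' \<in> RA" "r < r'" "\<not>(\<exists>r''\<in>RA. r < r'' \<and> r'' < r')"
  shows "V r' = V r - int m"
proof -
  obtain q where q: "q \<in> Rec" "V q = V r - int m" using rec_exists by blast
  have rR: "r \<in> Rec" "V r mod int m = j" using assms(1) RA_Rec by auto
  have r'R: "r' \<in> Rec" "V r' mod int m = j" using assms(2) RA_Rec by auto
  have "(V r - int m) mod int m = V r mod int m" by (simp add: mod_diff_right_eq[symmetric])
  then have qRA: "q \<in> RA" using q rR RA_Rec by simp
  have "r < q"
  proof (rule ccontr)
    assume "\<not> r < q"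
    then consider "q = r" | "q < r" by linarith
    then show False
    proof cases
      case 1 then show False using q m1 by simp
    next
      case 2 then have "V q > V r" using rR unfolding Rec_def by blast
      then show False using q by simp
    qed
  qed
  have "\<not> q < r'" using assms(4) qRA \<open>r < q\<close> by blast
  moreover have "\<not> r' < q"
  proof
    assume rq: "r' < q"
    have a: "V r' < V r" using r'R assms(3) unfolding Rec_def by blast
    have b: "V r' > V q" using q(1) rq unfolding Rec_def by blast
    have "V r mod int m = V r' mod int m" using rR r'R by simp
    then have "int m dvd (V r - V r')" by (simp add: mod_eq_dvd_iff)
    then have "int m \<le> V r - V r'" using a by (intro zdvd_imp_le) auto
    then show False using b q by simp
  qed
  ultimately have "q = r'" by simp
  then show ?thesis using q by simp
qed

lemma TB_ang: "is_angulation m n TB"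
proof -
  have nc: "noncrossing n TB"
    unfolding noncrossing_def TB_chords TB_rays using CH_nc CH_noray RA_Rec by blast
  have chordc: "1 + pieces (CH - {(a, b)}) a b = m + 2" if ab: "(a,b) \<in> CH" for a b
  proof -
    define F where "F = CH - {(a,b)}"
    have lamF: "lam F" unfolding F_def by (rule lam_subset[OF lamCH]) auto
    have hyp: "\<forall>q\<in>within F a b. int m * int (card (within F (fst q) (snd q))) - (snd q - fst q) = -1"
    proof
      fix q assume q: "q \<in> within F a b"
      have qC: "q \<in> CH" "q \<noteq> (a,b)" "a \<le> fst q" "snd q \<le> b" using q unfolding F_def by (auto simp: mem_within)
      have "within F (fst q) (snd q) = within CH (fst q) (snd q)"
      proof -
        have "(a,b) \<notin> within CH (fst q) (snd q)"
        proof
          assume "(a,b) \<in> within CH (fst q) (snd q)"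
          then have "fst q \<le> a" "b \<le> snd q" by (auto simp: mem_within)
          then show False using qC prod_eq_iff[of q "(a,b)"] by auto
        qed
        then show ?thesis unfolding F_def within_def by auto
      qed
      moreover have "int m * int (card (within CH (fst q) (snd q))) - (snd q - fst q) = -1"
        using CH_S[of "fst q" "snd q"] qC(1) by simp
      ultimately show "int m * int (card (within F (fst q) (snd q))) - (snd q - fst q) = -1" by simp
    qed
    have ab': "a < b" using CH_bounds[OF ab] by simp
    have e1: "int m * int (card (within F a b)) - (b - a) = - int (pieces F a b)"
      using decomp[OF lamF _ hyp] ab' by simp
    have wF: "within F a b = within CH a b - {(a,b)}" unfolding F_def within_def by auto
    have abw: "(a,b) \<in> within CH a b" using ab by (simp add: mem_within)
    have "card (within CH a b) = Suc (card (within CH a b - {(a,b)}))"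
      by (rule card.remove[OF finite_within[OF lamCH] abw])
    then have "card (within CH a b) = card (within F a b) + 1" unfolding wF by simp
    then have "int m * int (card (within F a b)) - (b - a) = -1 - int m"
      using CH_S[OF ab] by (simp add: algebra_simps)
    then have "int (pieces F a b) = int m + 1" using e1 by simp
    then show ?thesis unfolding F_def by simp
  qed
  have gapc: "2 + pieces CH r r' = m + 2"
    if "r \<in> RA" "r' \<in> RA" "r < r'" "\<not>(\<exists>r''\<in>RA. r < r'' \<and> r'' < r')" for r r'
  proof -
    have g: "V r' = V r - int m" by (rule RA_gap[OF that])
    have r'R: "r' \<in> Rec" using that(2) RA_Rec by blast
    have ends: "snd p \<le> r'" if p: "p \<in> CH" "fst p < r'" for p
    proof -
      obtain a' b' where ab: "p = (a',b')" by (cases p)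
      have "\<not>(a' < r' \<and> r' < b')" using CH_noray[of a' b' r'] p ab r'R by simp
      then show ?thesis using p ab by simp
    qed
    have "{p\<in>CH. r \<le> fst p \<and> fst p < r'} = within CH r r'"
      using ends lamD2[OF lamCH] by (force simp: mem_within)
    then have "V r' - V r = int m * int (card (within CH r r')) - (r' - r)"
      using CH_diff[of r r'] that(3) by simp
    also have "\<dots> = - int (pieces CH r r')"
    proof (rule decomp[OF lamCH])
      show "r \<le> r'" using that(3) by simp
      show "\<forall>p\<in>within CH r r'. int m * int (card (within CH (fst p) (snd p))) - (snd p - fst p) = -1"
      proof
        fix p assume "p \<in> within CH r r'"
        then have "(fst p, snd p) \<in> CH" by (simp add: mem_within)
        from CH_S[OF this] show "int m * int (card (within CH (fst p) (snd p))) - (snd p - fst p) = -1" .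
      qed
    qed
    finally show ?thesis using g by simp
  qed
  have c1: "\<forall>(a,b)\<in>CH. 1 + pieces (CH - {(a,b)}) a b = m + 2" using chordc by blast
  have c2: "\<forall>r\<in>RA. \<forall>r'\<in>RA. r < r' \<and> \<not>(\<exists>r''\<in>RA. r < r'' \<and> r'' < r') \<longrightarrow> 2 + pieces CH r r' = m + 2"
    using gapc by blast
  have "RA \<noteq> {}" using RA_ne by blast
  then show ?thesis unfolding is_angulation_def TB_chords TB_rays using TB_arcs nc c1 c2 by blast
qed

lemma TB_spokes: "num_spokes TB = s"
proof -
  have "{i. Spoke i \<in> TB} = nat ` (RA \<inter> {0..<int n})"
  proof
    show "{i. Spoke i \<in> TB} \<subseteq> nat ` (RA \<inter> {0..<int n})"
    proof
      fix i assume "i \<in> {i. Spoke i \<in> TB}"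
      then have "i < n" "int i \<in> RA" by (auto simp: build_Spoke)
      then show "i \<in> nat ` (RA \<inter> {0..<int n})" by (intro image_eqI[of _ _ "int i"]) auto
    qed
    show "nat ` (RA \<inter> {0..<int n}) \<subseteq> {i. Spoke i \<in> TB}"
      by (auto simp: build_Spoke nat_less_iff)
  qed
  moreover have "inj_on nat (RA \<inter> {0..<int n})" by (rule inj_onI) auto
  ultimately have "num_spokes TB = card (RA \<inter> {0..<int n})" unfolding num_spokes_def by (simp add: card_image)
  then show ?thesis using RA_count by simp
qed

lemma TB_A: "Aof n TB u = A u"
proof -
  define c where "c = u mod int n"
  have c: "0 \<le> c" "c < int n" unfolding c_def using npos by auto
  have "bij_betw (\<lambda>k. c + int k) {k. Chord (nat c) k \<in> TB} {d. (c,d) \<in> CH}"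
  proof (rule bij_betw_imageI)
    show "inj_on (\<lambda>k. c + int k) {k. Chord (nat c) k \<in> TB}" by (rule inj_onI) simp
    show "(\<lambda>k. c + int k) ` {k. Chord (nat c) k \<in> TB} = {d. (c,d) \<in> CH}"
    proof
      show "(\<lambda>k. c + int k) ` {k. Chord (nat c) k \<in> TB} \<subseteq> {d. (c,d) \<in> CH}"
        using c by (auto simp: build_Chord)
      show "{d. (c,d) \<in> CH} \<subseteq> (\<lambda>k. c + int k) ` {k. Chord (nat c) k \<in> TB}"
      proof
        fix d assume d: "d \<in> {d. (c,d) \<in> CH}"
        then have b: "c + 2 \<le> d" "d \<le> c + int n" using CH_bounds by auto
        have "Chord (nat c) (nat (d - c)) \<in> TB" using d b c by (auto simp: build_Chord nat_less_iff le_nat_iff)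
        moreover have "d = c + int (nat (d - c))" using b by simp
        ultimately show "d \<in> (\<lambda>k. c + int k) ` {k. Chord (nat c) k \<in> TB}" by blast
      qed
    qed
  qed
  then have "card {k. Chord (nat c) k \<in> TB} = card {d. (c,d) \<in> CH}" by (rule bij_betw_same_card)
  also have "\<dots> = A c" by (rule CH_card)
  finally show ?thesis unfolding Aof_def c_def using Aper[of u] by simp
qed

lemma TB_Aof: "Aof n TB = A" using TB_A by auto

lemma TB_j: "jof m n TB = j"
proof -
  obtain r where r: "r \<in> RA" using RA_ne by blast
  then have "Spoke (nat (r mod int n)) \<in> TB"
    using TB_rays lift_rays_iff[OF TB_arcs npos] by blast
  then have sp: "Spoke (LEAST i. Spoke i \<in> TB) \<in> TB" by (rule LeastI)
  then have "int (LEAST i. Spoke i \<in> TB) \<in> RA" by (simp add: build_Spoke)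
  then show ?thesis unfolding jof_def TB_Aof RA_Rec by simp
qed

end

lemma sum_int_window_nat:
  "(\<Sum>u\<in>{0..<int n}. f u) = (\<Sum>i\<in>{0..<n}. f (int i))"
proof -
  have "{0..<int n} = int ` {0..<n}" by (simp only: image_int_atLeastLessThan) simp
  then show ?thesis by (simp add: sum.reindex)
qed

lemma sum_list_map_upt: "sum_list (map f [0..<n]) = (\<Sum>i\<in>{0..<n}. f i)"
  using sum_set_upt_conv_sum_list_nat[of f 0 n] by simp

definition Phi :: "nat \<Rightarrow> nat \<Rightarrow> parc set \<Rightarrow> int \<times> nat list" where
  "Phi m n T = (jof m n T, map (\<lambda>i. Aof n T (int i)) [0..<n])"

definition Psi :: "nat \<Rightarrow> nat \<Rightarrow> int \<times> nat list \<Rightarrow> parc set" where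
  "Psi m n p = build m n (fst p) (\<lambda>u. snd p ! nat (u mod int n))"

lemma (in valid) Psi_Phi: "Psi m n (Phi m n T) = T"
proof -
  have A': "(\<lambda>u. map (\<lambda>i. Aof n T (int i)) [0..<n] ! nat (u mod int n)) = Aof n T"
  proof
    fix u
    have "0 \<le> u mod int n" "u mod int n < int n" using npos by auto
    then have "map (\<lambda>i. Aof n T (int i)) [0..<n] ! nat (u mod int n) = Aof n T (u mod int n)"
      by (simp add: nat_less_iff)
    also have "\<dots> = Aof n T u" unfolding Aof_def by simp
    finally show "map (\<lambda>i. Aof n T (int i)) [0..<n] ! nat (u mod int n) = Aof n T u" .
  qed
  have e: "Psi m n (Phi m n T) = build m n (jof m n T) (Aof n T)"
    unfolding Psi_def Phi_def using A' by simp
  show ?thesis unfolding e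
  proof (rule set_eqI)
    fix a show "a \<in> build m n (jof m n T) (Aof n T) \<longleftrightarrow> a \<in> T"
    proof (cases a)
      case (Spoke i)
      have "Spoke i \<in> T \<longleftrightarrow> i < n \<and> int i \<in> RR"
      proof
        assume h: "Spoke i \<in> T"
        then have "i < n" using Tarcs arcs_Spoke by blast
        then show "i < n \<and> int i \<in> RR" using h by (simp add: RR_iff)
      next
        assume h: "i < n \<and> int i \<in> RR"
        then have md: "int i mod int n = int i" by simp
        have "Spoke (nat (int i mod int n)) \<in> T" using h RR_iff by blast
        then show "Spoke i \<in> T" unfolding md by simp
      qed
      then show ?thesis using Spoke RR_eq by (simp add: build_Spoke)
    next
      case (Chord i k)
      have "Chord i k \<in> T \<longleftrightarrow> i < n \<and> 2 \<le> k \<and> k \<le> n \<and> (int i, int i + int k) \<in> CC"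
      proof
        assume h: "Chord i k \<in> T"
        then have "i < n \<and> 2 \<le> k \<and> k \<le> n" using Tarcs arcs_Chord by blast
        then show "i < n \<and> 2 \<le> k \<and> k \<le> n \<and> (int i, int i + int k) \<in> CC" using h by (simp add: CC_iff)
      next
        assume h: "i < n \<and> 2 \<le> k \<and> k \<le> n \<and> (int i, int i + int k) \<in> CC"
        then have md: "int i mod int n = int i" by simp
        have "Chord (nat (int i mod int n)) (nat (int i + int k - int i)) \<in> T" using h CC_iff by blast
        then show "Chord i k \<in> T" unfolding md by simp
      qed
      then show ?thesis using Chord CC_eq by (simp add: build_Chord)
    qed
  qed
qed

lemma (in valid) Phi_in:
  assumes "n = m * (K + num_spokes T)"
  shows "Phi m n T \<in> {0..<int m} \<times> {xs. length xs = n \<and> sum_list xs = K}"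
proof -
  have "0 \<le> jof m n T" "jof m n T < int m" unfolding jof_def using m1 by auto
  moreover have "sum_list (map (\<lambda>i. Aof n T (int i)) [0..<n]) = K"
  proof -
    have "int m * (\<Sum>u\<in>{0..<int n}. int (AA u)) = int m * int K"
      using sum_AA assms by (simp add: algebra_simps)
    then have "(\<Sum>u\<in>{0..<int n}. int (AA u)) = int K" using m1 by simp
    then have "(\<Sum>i\<in>{0..<n}. int (AA (int i))) = int K" by (simp add: sum_int_window_nat)
    moreover have "int (\<Sum>i\<in>{0..<n}. AA (int i)) = (\<Sum>i\<in>{0..<n}. int (AA (int i)))" by (rule of_nat_sum)
    ultimately have "(\<Sum>i\<in>{0..<n}. AA (int i)) = K" by linarith
    then show ?thesis by (simp add: sum_list_map_upt)
  qed
  ultimately show ?thesis unfolding Phi_def by simp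
qed

lemma constr_from_list:
  assumes m1: "m \<ge> 1" and s1: "s \<ge> 1" and nK: "n = m * (K + s)"
    and j: "0 \<le> j" "j < int m" and xs: "length xs = n" "sum_list xs = K"
  shows "constr m n s K (\<lambda>u. xs ! nat (u mod int n)) j"
proof
  show "m \<ge> 1" "s \<ge> 1" "n = m * (K + s)" "0 \<le> j" "j < int m" using assms by auto
  show "\<And>u. xs ! nat (u mod int n) = xs ! nat (u mod int n mod int n)" by simp
  have "(\<Sum>u\<in>{0..<int n}. xs ! nat (u mod int n)) = (\<Sum>i\<in>{0..<n}. xs ! nat (int i mod int n))"
    by (rule sum_int_window_nat)
  also have "\<dots> = (\<Sum>i\<in>{0..<n}. xs ! i)"
    by (rule sum.cong) (auto simp: nat_mod_as_int[symmetric])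
  also have "\<dots> = K" using xs sum_list_sum_nth[of xs] by simp
  finally show "(\<Sum>u\<in>{0..<int n}. xs ! nat (u mod int n)) = K" .
qed

theorem theorem3p4:
  fixes m l n s :: nat
  assumes "m \<ge> 1" and "l \<ge> 1" and "n = m * l" and "1 \<le> s" and "s \<le> l"
  shows "card {T. T \<subseteq> arcs n \<and> is_angulation m n T \<and> num_spokes T = s}
           = m * ((n + l - s - 1) choose (n - 1))"
proof -
  define K where "K = l - s"
  have nK: "n = m * (K + s)" unfolding K_def using assms by simp
  have n1: "n \<ge> 1" using assms by simp
  define VS where "VS = {T. T \<subseteq> arcs n \<and> is_angulation m n T \<and> num_spokes T = s}"
  define TG where "TG = {0..<int m} \<times> {xs::nat list. length xs = n \<and> sum_list xs = K}"
  have val: "valid m n T" if "T \<in> VS" for T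
    using that assms n1 unfolding VS_def by unfold_locales auto
  have bij: "bij_betw (Phi m n) VS TG"
  proof (rule bij_betw_byWitness[where f' = "Psi m n"])
    show "\<forall>T\<in>VS. Psi m n (Phi m n T) = T" using val valid.Psi_Phi by blast
    show "Phi m n ` VS \<subseteq> TG"
    proof
      fix p assume "p \<in> Phi m n ` VS"
      then obtain T where T: "T \<in> VS" "p = Phi m n T" by blast
      have "n = m * (K + num_spokes T)" using T(1) nK unfolding VS_def by simp
      then show "p \<in> TG" using valid.Phi_in[OF val[OF T(1)]] T unfolding TG_def by blast
    qed
    have cp: "constr m n s K (\<lambda>u. snd p ! nat (u mod int n)) (fst p)" if "p \<in> TG" for p
      using that assms nK unfolding TG_def by (intro constr_from_list) auto
    show "\<forall>p\<in>TG. Phi m n (Psi m n p) = p"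
    proof
      fix p assume p: "p \<in> TG"
      interpret C: constr m n s K "\<lambda>u. snd p ! nat (u mod int n)" "fst p" by (rule cp[OF p])
      have len: "length (snd p) = n" using p unfolding TG_def by auto
      have "map (\<lambda>i. Aof n (Psi m n p) (int i)) [0..<n] = map (\<lambda>i. snd p ! i) [0..<n]"
        unfolding Psi_def C.TB_Aof by (simp add: nat_mod_as_int[symmetric])
      also have "\<dots> = snd p" using map_nth[of "snd p"] len by simp
      finally show "Phi m n (Psi m n p) = p" unfolding Phi_def
        using C.TB_j unfolding Psi_def by (simp add: prod_eq_iff)
    qed
    show "Psi m n ` TG \<subseteq> VS"
    proof
      fix T assume "T \<in> Psi m n ` TG"
      then obtain p where p: "p \<in> TG" "T = Psi m n p" by blast
      interpret C: constr m n s K "\<lambda>u. snd p ! nat (u mod int n)" "fst p" by (rule cp[OF p(1)])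
      show "T \<in> VS" unfolding VS_def p(2) Psi_def using C.TB_arcs C.TB_ang C.TB_spokes by simp
    qed
  qed
  have "card VS = card TG" by (rule bij_betw_same_card[OF bij])
  also have "card TG = m * ((K + n - 1) choose K)"
    unfolding TG_def card_cartesian_product using card_length_sum_list[of n K] by simp
  also have "(K + n - 1) choose K = (K + n - 1) choose (n - 1)"
    using binomial_symmetric[of K "K + n - 1"] n1 by simp
  also have "K + n - 1 = n + l - s - 1" unfolding K_def using assms by simp
  finally show ?thesis unfolding VS_def .
qed

end
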